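(* Let $f=p/q$ be a rational function with $p,q$ of degree $l$, positive on the standard simplex $\Delta$, with $b_\alpha(q,j,\Delta)>0$ for all $|\alpha|=j$, $j\ge l$, and let $\underline f=\min_{x\in\Delta}f(x)>0$. If the integer $k\ge l$ satisfies \[ k>\frac{\omega}{\underline f}+1, \] then $f$ satisfies the global certificate of positivity $\mathrm{Cert}(b(f,k,\Delta))$: $b_\alpha(f,k,\Delta)\ge 0$ for all $|\alpha|=k$ and $b_{k\hat e_i}(f,k,\Delta)>0$ for all $i=0,\dots,n$.
   Context: Notation as follows. $\Delta$ is the standard simplex in $\mathbb{R}^n$ with barycentric coordinates $\lambda=(1-\sum x_i,x_1,\dots,x_n)$; $B^{(k)}_\alpha=\frac{k!}{\alpha_0!\cdots\alpha_n!}\lambda^\alpha$ ($\alpha\in\mathbb{N}^{n+1}$, $|\alpha|=k$); $b_\alpha(p,k,\Delta)$ are Bernstein coefficients; $b_\alpha(f,k,\Delta)=b_\alpha(p,k,\Delta)/b_\alpha(q,k,\Delta)$; $\hat e_0,\dots,\hat e_n$ unit vectors of $\mathbb{R}^{n+1}$. The constant is $\omega:=\frac{n(n+2)l(l-1)}{24\min_{|\alpha|=l}b_\alpha(q,l,\Delta)}\big(\|\nabla^2p\|_\infty+\zeta\|\nabla^2q\|_\infty\big)$ with $\zeta:=\max\{|\min_{|\alpha|=l}b_\alpha(f,l,\Delta)|,|\max_{|\alpha|=l}b_\alpha(f,l,\Delta)|\}$, where, with convention $\hat e_{-1}:=\hat e_n$, $\|\nabla^2p\|_\infty=\max_{|\gamma|=l-2,0\le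 i<j\le n}|b_{\gamma+\hat e_i+\hat e_{j-1}}+b_{\gamma+\hat e_{i-1}+\hat e_j}-b_{\gamma+\hat e_{i-1}+\hat e_{j-1}}-b_{\gamma+\hat e_i+\hat e_j}|$ for $b=b(p,l,\Delta)$, and likewise for $q$. *)

theory Defs
  imports Complex_Main
begin

text \<open>Points of R^n are functions x :: nat => real, using coordinates x 1, ..., x n.
  Multi-indices alpha in N^(n+1) are functions nat => nat supported on {0..n}.\<close>

definition mindex :: "nat \<Rightarrow> nat \<Rightarrow> (nat \<Rightarrow> nat) set" where
  "mindex n k = {\<alpha>. (\<forall>i>n. \<alpha> i = 0) \<and> (\<Sum>i\<le>n. \<alpha> i) = k}"

definition monoms :: "nat \<Rightarrow> nat \<Rightarrow> (nat \<Rightarrow> nat) set" where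
  "monoms n l = {\<beta>. (\<forall>i. (i = 0 \<or> i > n) \<longrightarrow> \<beta> i = 0) \<and> (\<Sum>i\<in>{1..n}. \<beta> i) \<le> l}"

definition is_poly :: "nat \<Rightarrow> nat \<Rightarrow> ((nat \<Rightarrow> real) \<Rightarrow> real) \<Rightarrow> bool" where
  "is_poly n l P \<longleftrightarrow> (\<exists>c :: (nat \<Rightarrow> nat) \<Rightarrow> real.
      \<forall>x. P x = (\<Sum>\<beta>\<in>monoms n l. c \<beta> * (\<Prod>i\<in>{1..n}. x i ^ \<beta> i)))"

definition simplex :: "nat \<Rightarrow> (nat \<Rightarrow> real) set" where
  "simplex n = {x. (\<forall>i. (i = 0 \<or> i > n) \<longrightarrow> x i = 0) \<and> (\<forall>i\<in>{1..n}. 0 \<le> x i)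
                   \<and> (\<Sum>i\<in>{1..n}. x i) \<le> 1}"

definition bary :: "nat \<Rightarrow> (nat \<Rightarrow> real) \<Rightarrow> nat \<Rightarrow> real" where
  "bary n x i = (if i = 0 then 1 - (\<Sum>j\<in>{1..n}. x j) else x i)"

definition bern :: "nat \<Rightarrow> nat \<Rightarrow> (nat \<Rightarrow> nat) \<Rightarrow> (nat \<Rightarrow> real) \<Rightarrow> real" where
  "bern n k \<alpha> x = fact k / (\<Prod>i\<le>n. fact (\<alpha> i)) * (\<Prod>i\<le>n. bary n x i ^ \<alpha> i)"

definition bcoef :: "nat \<Rightarrow> nat \<Rightarrow> ((nat \<Rightarrow> real) \<Rightarrow> real) \<Rightarrow> (nat \<Rightarrow> nat) \<Rightarrow> real" where
  "bcoef n k P = (THE b. (\<forall>\<alpha>. \<alpha> \<notin> mindex n k \<longrightarrow> b \<alpha> = 0) \<and>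
        (\<forall>x. P x = (\<Sum>\<alpha>\<in>mindex n k. b \<alpha> * bern n k \<alpha> x)))"

definition bcoef_rat :: "nat \<Rightarrow> nat \<Rightarrow> ((nat \<Rightarrow> real) \<Rightarrow> real) \<Rightarrow> ((nat \<Rightarrow> real) \<Rightarrow> real)
    \<Rightarrow> (nat \<Rightarrow> nat) \<Rightarrow> real" where
  "bcoef_rat n k p q \<alpha> = bcoef n k p \<alpha> / bcoef n k q \<alpha>"

definition uvec :: "nat \<Rightarrow> nat \<Rightarrow> nat" where
  "uvec i = (\<lambda>j. if j = i then 1 else 0)"

definition madd3 :: "(nat \<Rightarrow> nat) \<Rightarrow> nat \<Rightarrow> nat \<Rightarrow> nat \<Rightarrow> nat" where
  "madd3 \<gamma> i j = (\<lambda>m. \<gamma> m + uvec i m + uvec j m)"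

definition prv :: "nat \<Rightarrow> nat \<Rightarrow> nat" where
  "prv n i = (if i = 0 then n else i - 1)"

definition hess_norm :: "nat \<Rightarrow> nat \<Rightarrow> ((nat \<Rightarrow> real) \<Rightarrow> real) \<Rightarrow> real" where
  "hess_norm n l P = Max {\<bar>bcoef n l P (madd3 \<gamma> i (prv n j))
                          + bcoef n l P (madd3 \<gamma> (prv n i) j)
                          - bcoef n l P (madd3 \<gamma> (prv n i) (prv n j))
                          - bcoef n l P (madd3 \<gamma> i j)\<bar> |
                        \<gamma> i j. \<gamma> \<in> mindex n (l - 2) \<and> i < j \<and> j \<le> n}"

definition zeta :: "nat \<Rightarrow> nat \<Rightarrow> ((nat \<Rightarrow> real) \<Rightarrow> real) \<Rightarrow> ((nat \<Rightarrow> real) \<Rightarrow> real) \<Rightarrow> real" where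
  "zeta n l p q = max \<bar>Min (bcoef_rat n l p q ` mindex n l)\<bar> \<bar>Max (bcoef_rat n l p q ` mindex n l)\<bar>"

definition omega :: "nat \<Rightarrow> nat \<Rightarrow> ((nat \<Rightarrow> real) \<Rightarrow> real) \<Rightarrow> ((nat \<Rightarrow> real) \<Rightarrow> real) \<Rightarrow> real" where
  "omega n l p q = real (n * (n + 2) * l * (l - 1)) / (24 * Min (bcoef n l q ` mindex n l))
                    * (hess_norm n l p + zeta n l p q * hess_norm n l q)"

end

theory Submission
  imports Defs "HOL-Computational_Algebra.Polynomial"
begin


lemma finite_mindex[simp]: "finite (mindex n k)"
proof -
  have "mindex n k \<subseteq> {f. \<forall>x. (x \<in> {..n} \<longrightarrow> f x \<in> {..k}) \<and> (x \<notin> {..n} \<longrightarrow> f x = 0)}"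
  proof
    fix f assume f: "f \<in> mindex n k"
    { fix x assume "x \<le> n"
      hence "f x \<le> (\<Sum>i\<le>n. f i)" by (intro member_le_sum) auto
      hence "f x \<le> k" using f by (simp add: mindex_def) }
    thus "f \<in> {f. \<forall>x. (x \<in> {..n} \<longrightarrow> f x \<in> {..k}) \<and> (x \<notin> {..n} \<longrightarrow> f x = 0)}"
      using f by (auto simp: mindex_def)
  qed
  thus ?thesis by (rule finite_subset) (intro finite_set_of_finite_funs, auto)
qed

definition ad :: "(nat \<Rightarrow> nat) \<Rightarrow> nat \<Rightarrow> nat \<Rightarrow> nat" where
  "ad \<gamma> i = (\<lambda>m. \<gamma> m + uvec i m)"
definition sb :: "(nat \<Rightarrow> nat) \<Rightarrow> nat \<Rightarrow> nat \<Rightarrow> nat" where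
  "sb \<gamma> i = (\<lambda>m. \<gamma> m - uvec i m)"

lemma sum_uvec[simp]: "(\<Sum>m\<le>n. uvec i m) = (if i \<le> n then 1 else 0)"
  unfolding uvec_def by (simp add: sum.delta)

lemma mindex_le: "\<alpha> \<in> mindex n k \<Longrightarrow> i \<le> n \<Longrightarrow> \<alpha> i \<le> k"
proof -
  assume a: "\<alpha> \<in> mindex n k" "i \<le> n"
  hence "\<alpha> i \<le> (\<Sum>j\<le>n. \<alpha> j)" by (intro member_le_sum) auto
  thus ?thesis using a by (simp add: mindex_def)
qed

lemma mindex_0: "mindex n 0 = {\<lambda>_. 0}"
proof -
  { fix \<alpha> assume "\<alpha> \<in> mindex n 0"
    hence "\<alpha> = (\<lambda>_. 0)" unfolding mindex_def
      by (auto simp: fun_eq_iff) (metis atMost_iff not_le) }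
  thus ?thesis by (auto simp: mindex_def)
qed

lemma ad_in: "\<gamma> \<in> mindex n k \<Longrightarrow> i \<le> n \<Longrightarrow> ad \<gamma> i \<in> mindex n (Suc k)"
  unfolding mindex_def ad_def by (auto simp: sum.distrib uvec_def)

lemma sb_ad[simp]: "sb (ad \<gamma> i) i = \<gamma>"
  unfolding sb_def ad_def by auto

lemma ad_sb: "\<beta> i \<ge> 1 \<Longrightarrow> ad (sb \<beta> i) i = \<beta>"
  unfolding sb_def ad_def uvec_def by (auto simp: fun_eq_iff)

lemma sb_in: assumes "\<beta> \<in> mindex n (Suc k)" "i \<le> n" "\<beta> i \<ge> 1"
  shows "sb \<beta> i \<in> mindex n k"
proof -
  have "(\<Sum>m\<le>n. \<beta> m) = (\<Sum>m\<le>n. sb \<beta> i m) + (\<Sum>m\<le>n. uvec i m)"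
    unfolding sum.distrib[symmetric] sb_def using assms(3)
    by (intro sum.cong) (auto simp: uvec_def)
  thus ?thesis using assms unfolding mindex_def by (auto simp: sb_def uvec_def)
qed

lemma ad_self[simp]: "ad \<gamma> i i = Suc (\<gamma> i)"
  by (simp add: ad_def uvec_def)

lemma reindex_bij: "i \<le> n \<Longrightarrow> bij_betw (\<lambda>\<gamma>. ad \<gamma> i) (mindex n k) {\<beta> \<in> mindex n (Suc k). \<beta> i \<ge> 1}"
  apply (rule bij_betw_byWitness[where f'="\<lambda>\<beta>. sb \<beta> i"])
  using ad_in sb_in ad_sb by auto

lemma sum_reindex_ad:
  fixes G :: "(nat \<Rightarrow> nat) \<Rightarrow> real"
  assumes "i \<le> n"
  shows "(\<Sum>\<gamma>\<in>mindex n k. real (Suc (\<gamma> i)) * G (ad \<gamma> i)) = (\<Sum>\<beta>\<in>mindex n (Suc k). real (\<beta> i) * G \<beta>)"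
proof -
  have e: "(\<Sum>\<gamma>\<in>mindex n k. (\<lambda>\<beta>. real (\<beta> i) * G \<beta>) (ad \<gamma> i))
     = (\<Sum>\<beta>\<in>{\<beta> \<in> mindex n (Suc k). \<beta> i \<ge> 1}. real (\<beta> i) * G \<beta>)"
    by (rule sum.reindex_bij_betw[OF reindex_bij[OF assms]])
  have "(\<Sum>\<gamma>\<in>mindex n k. real (Suc (\<gamma> i)) * G (ad \<gamma> i))
     = (\<Sum>\<beta>\<in>{\<beta> \<in> mindex n (Suc k). \<beta> i \<ge> 1}. real (\<beta> i) * G \<beta>)"
    using e by simp
  also have "\<dots> = (\<Sum>\<beta>\<in>mindex n (Suc k). real (\<beta> i) * G \<beta>)"
    by (rule sum.mono_neutral_left) auto
  finally show ?thesis .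
qed

lemma prod_ad:
  assumes "finite A" "i \<in> A"
  shows "(\<Prod>m\<in>A. F (ad \<gamma> i m) m) = F (Suc (\<gamma> i)) i * (\<Prod>m\<in>A-{i}. F (\<gamma> m) m)"
proof -
  have "(\<Prod>m\<in>A. F (ad \<gamma> i m) m) = F (ad \<gamma> i i) i * (\<Prod>m\<in>A-{i}. F (ad \<gamma> i m) m)"
    using prod.remove[OF assms] by blast
  also have "(\<Prod>m\<in>A-{i}. F (ad \<gamma> i m) m) = (\<Prod>m\<in>A-{i}. F (\<gamma> m) m)"
    by (intro prod.cong) (auto simp: ad_def uvec_def)
  finally show ?thesis by simp
qed

definition Bk :: "nat \<Rightarrow> nat \<Rightarrow> (nat \<Rightarrow> nat) \<Rightarrow> (nat \<Rightarrow> real) \<Rightarrow> real" where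
  "Bk n k \<beta> T = fact k / (\<Prod>i\<le>n. fact (\<beta> i)) * (\<Prod>i\<le>n. T i ^ \<beta> i)"

lemma bern_Bk: "bern n k \<beta> x = Bk n k \<beta> (bary n x)"
  unfolding bern_def Bk_def ..

lemma Bk_step:
  assumes "i \<le> n"
  shows "T i * Bk n k \<gamma> T = real (Suc (\<gamma> i)) / real (Suc k) * Bk n (Suc k) (ad \<gamma> i) T"
proof -
  have f: "(\<Prod>m\<le>n. fact (ad \<gamma> i m) :: real) = real (Suc (\<gamma> i)) * (\<Prod>m\<le>n. fact (\<gamma> m))"
    using prod_ad[of "{..n}" i "\<lambda>a m. fact a :: real" \<gamma>] prod.remove[of "{..n}" i "\<lambda>m. fact (\<gamma> m) :: real"] assms
    by simp
  have p: "(\<Prod>m\<le>n. T m ^ ad \<gamma> i m) = T i * (\<Prod>m\<le>n. T m ^ \<gamma> m)"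
    using prod_ad[of "{..n}" i "\<lambda>a m. T m ^ a" \<gamma>] prod.remove[of "{..n}" i "\<lambda>m. T m ^ \<gamma> m"] assms
    by simp
  have nz: "(\<Prod>m\<le>n. fact (\<gamma> m) :: real) \<noteq> 0" by (simp add: prod_zero_iff)
  show ?thesis unfolding Bk_def f p using nz
    by (simp del: of_nat_Suc add: field_simps)
qed

definition ev :: "nat \<Rightarrow> nat \<Rightarrow> ((nat \<Rightarrow> nat) \<Rightarrow> real) \<Rightarrow> (nat \<Rightarrow> real) \<Rightarrow> real" where
  "ev n k h T = (\<Sum>\<beta>\<in>mindex n k. Bk n k \<beta> T * h \<beta>)"

definition dc :: "nat \<Rightarrow> (nat \<Rightarrow> real) \<Rightarrow> ((nat \<Rightarrow> nat) \<Rightarrow> real) \<Rightarrow> (nat \<Rightarrow> nat) \<Rightarrow> real" where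
  "dc n T h = (\<lambda>\<gamma>. \<Sum>i\<le>n. T i * h (ad \<gamma> i))"

lemma sum_mindex_size: "\<beta> \<in> mindex n k \<Longrightarrow> (\<Sum>i\<le>n. real (\<beta> i)) = real k"
  unfolding mindex_def by (simp flip: of_nat_sum)

lemma ev_dc: "ev n (Suc k) h T = ev n k (dc n T h) T"
proof -
  have "ev n k (dc n T h) T = (\<Sum>\<gamma>\<in>mindex n k. \<Sum>i\<le>n. T i * Bk n k \<gamma> T * h (ad \<gamma> i))"
    unfolding ev_def dc_def by (simp add: sum_distrib_left mult.assoc mult.left_commute)
  also have "\<dots> = (\<Sum>i\<le>n. \<Sum>\<gamma>\<in>mindex n k. T i * Bk n k \<gamma> T * h (ad \<gamma> i))"
    by (rule sum.swap)
  also have "\<dots> = (\<Sum>i\<le>n. \<Sum>\<gamma>\<in>mindex n k. real (Suc (\<gamma> i)) * (Bk n (Suc k) (ad \<gamma> i) T * h (ad \<gamma> i) / real (Suc k)))"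
    by (intro sum.cong refl) (simp add: Bk_step)
  also have "\<dots> = (\<Sum>i\<le>n. \<Sum>\<beta>\<in>mindex n (Suc k). real (\<beta> i) * (Bk n (Suc k) \<beta> T * h \<beta> / real (Suc k)))"
    by (intro sum.cong refl sum_reindex_ad) auto
  also have "\<dots> = (\<Sum>\<beta>\<in>mindex n (Suc k). (\<Sum>i\<le>n. real (\<beta> i)) * (Bk n (Suc k) \<beta> T * h \<beta> / real (Suc k)))"
    by (subst sum.swap) (simp add: sum_distrib_right sum_divide_distrib)
  also have "\<dots> = (\<Sum>\<beta>\<in>mindex n (Suc k). Bk n (Suc k) \<beta> T * h \<beta>)"
    by (intro sum.cong refl) (simp add: sum_mindex_size)
  finally show ?thesis unfolding ev_def ..
qed

lemma ev_0: "ev n 0 h T = h (\<lambda>_. 0)"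
  unfolding ev_def mindex_0 Bk_def by simp

lemma ev_const: "ev n k (\<lambda>_. c) T = c * (\<Sum>i\<le>n. T i) ^ k"
proof (induction k arbitrary: c)
  case 0 thus ?case by (simp add: ev_0)
next
  case (Suc k)
  have "dc n T (\<lambda>_. c) = (\<lambda>_. c * (\<Sum>i\<le>n. T i))"
    unfolding dc_def by (simp add: sum_distrib_left mult.commute)
  thus ?case by (simp add: ev_dc Suc)
qed



lemma poly_pos_zero:
  fixes c :: "nat \<Rightarrow> real"
  assumes R: "finite R" and z: "\<forall>t>0. (\<Sum>r\<in>R. c r * t ^ r) = 0"
  shows "\<forall>r\<in>R. c r = 0"
proof -
  define p where "p = (\<Sum>r\<in>R. monom (c r) r)"
  have pe: "poly p t = (\<Sum>r\<in>R. c r * t ^ r)" for t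
    unfolding p_def by (simp add: poly_sum poly_monom)
  have "p = 0"
  proof (rule ccontr)
    assume "p \<noteq> 0"
    hence "finite {t. poly p t = 0}" by (rule poly_roots_finite)
    moreover have "{0<..} \<subseteq> {t. poly p t = 0}" using z pe by auto
    ultimately have "finite {0::real<..}" by (rule finite_subset[rotated])
    thus False using infinite_Ioi by blast
  qed
  have "coeff p r = c r" if "r \<in> R" for r
    unfolding p_def coeff_sum coeff_monom using R that by (simp add: sum.delta)
  thus ?thesis using \<open>p = 0\<close> by auto
qed

lemma mpoly_zero:
  fixes a :: "(nat \<Rightarrow> nat) \<Rightarrow> real"
  assumes "finite S" "\<forall>\<sigma>\<in>S. \<forall>\<tau>\<in>S. (\<forall>i\<in>{1..m}. \<sigma> i = \<tau> i) \<longrightarrow> \<sigma> = \<tau>"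
    "\<forall>y. (\<forall>i\<in>{1..m}. y i > 0) \<longrightarrow> (\<Sum>\<sigma>\<in>S. a \<sigma> * (\<Prod>i\<in>{1..m}. y i ^ \<sigma> i)) = 0"
  shows "\<forall>\<sigma>\<in>S. a \<sigma> = 0"
  using assms
proof (induction m arbitrary: S a)
  case 0
  show ?case
  proof
    fix \<sigma> assume s: "\<sigma> \<in> S"
    hence "S = {\<sigma>}" using "0.prems"(2) by auto
    thus "a \<sigma> = 0" using "0.prems"(3) by auto
  qed
next
  case (Suc m)
  show ?case
  proof
    fix \<sigma>0 assume s0: "\<sigma>0 \<in> S"
    define r0 where "r0 = \<sigma>0 (Suc m)"
    define S' where "S' = {\<sigma>\<in>S. \<sigma> (Suc m) = r0}"
    have fS': "finite S'" using Suc.prems(1) unfolding S'_def by simp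
    have inj': "\<forall>\<sigma>\<in>S'. \<forall>\<tau>\<in>S'. (\<forall>i\<in>{1..m}. \<sigma> i = \<tau> i) \<longrightarrow> \<sigma> = \<tau>"
    proof (intro ballI impI)
      fix \<sigma> \<tau> assume st: "\<sigma> \<in> S'" "\<tau> \<in> S'" "\<forall>i\<in>{1..m}. \<sigma> i = \<tau> i"
      hence "\<forall>i\<in>{1..Suc m}. \<sigma> i = \<tau> i" unfolding S'_def
        by (auto simp: le_Suc_eq)
      thus "\<sigma> = \<tau>" using Suc.prems(2) st(1,2) unfolding S'_def by blast
    qed
    have van': "\<forall>y. (\<forall>i\<in>{1..m}. y i > 0) \<longrightarrow> (\<Sum>\<sigma>\<in>S'. a \<sigma> * (\<Prod>i\<in>{1..m}. y i ^ \<sigma> i)) = 0"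
    proof (intro allI impI)
      fix y :: "nat \<Rightarrow> real" assume yp: "\<forall>i\<in>{1..m}. y i > 0"
      define R where "R = (\<lambda>\<sigma>. \<sigma> (Suc m)) ` S"
      define C where "C r = (\<Sum>\<sigma>\<in>{\<sigma>\<in>S. \<sigma> (Suc m) = r}. a \<sigma> * (\<Prod>i\<in>{1..m}. y i ^ \<sigma> i))" for r
      have "\<forall>t>0. (\<Sum>r\<in>R. C r * t ^ r) = 0"
      proof (intro allI impI)
        fix t :: real assume t: "t > 0"
        define y' where "y' = y(Suc m := t)"
        have "\<forall>i\<in>{1..Suc m}. y' i > 0" using yp t unfolding y'_def by auto
        hence z: "(\<Sum>\<sigma>\<in>S. a \<sigma> * (\<Prod>i\<in>{1..Suc m}. y' i ^ \<sigma> i)) = 0" using Suc.prems(3) by blast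
        have pr: "(\<Prod>i\<in>{1..Suc m}. y' i ^ \<sigma> i) = (\<Prod>i\<in>{1..m}. y i ^ \<sigma> i) * t ^ \<sigma> (Suc m)" for \<sigma>
        proof -
          have "{1..Suc m} = insert (Suc m) {1..m}" by auto
          hence "(\<Prod>i\<in>{1..Suc m}. y' i ^ \<sigma> i) = y' (Suc m) ^ \<sigma> (Suc m) * (\<Prod>i\<in>{1..m}. y' i ^ \<sigma> i)"
            by simp
          also have "(\<Prod>i\<in>{1..m}. y' i ^ \<sigma> i) = (\<Prod>i\<in>{1..m}. y i ^ \<sigma> i)"
            unfolding y'_def by (intro prod.cong) auto
          finally show ?thesis unfolding y'_def by simp
        qed
        have "(\<Sum>\<sigma>\<in>S. a \<sigma> * (\<Prod>i\<in>{1..Suc m}. y' i ^ \<sigma> i))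
            = (\<Sum>r\<in>R. \<Sum>\<sigma>\<in>{\<sigma>\<in>S. \<sigma> (Suc m) = r}. a \<sigma> * (\<Prod>i\<in>{1..Suc m}. y' i ^ \<sigma> i))"
          unfolding R_def by (rule sum.image_gen[OF Suc.prems(1)])
        also have "\<dots> = (\<Sum>r\<in>R. C r * t ^ r)"
          unfolding C_def sum_distrib_right
          by (intro sum.cong refl) (subst pr, auto)
        finally show "(\<Sum>r\<in>R. C r * t ^ r) = 0" using z by simp
      qed
      hence "\<forall>r\<in>R. C r = 0" by (intro poly_pos_zero) (auto simp: R_def Suc.prems(1))
      moreover have "r0 \<in> R" unfolding R_def r0_def using s0 by auto
      ultimately show "(\<Sum>\<sigma>\<in>S'. a \<sigma> * (\<Prod>i\<in>{1..m}. y i ^ \<sigma> i)) = 0"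
        unfolding C_def S'_def by auto
    qed
    have "\<forall>\<sigma>\<in>S'. a \<sigma> = 0" using Suc.IH[OF fS' inj' van'] .
    thus "a \<sigma>0 = 0" using s0 unfolding S'_def r0_def by auto
  qed
qed

lemma atMost_split0: "{..n::nat} = insert 0 {1..n}" by auto

lemma mindex_0_eq: "\<beta> \<in> mindex n k \<Longrightarrow> \<beta> 0 + (\<Sum>i\<in>{1..n}. \<beta> i) = k"
  unfolding mindex_def atMost_split0 by simp

lemma bern_unique:
  assumes z: "\<forall>x. (\<Sum>\<beta>\<in>mindex n k. c \<beta> * bern n k \<beta> x) = 0"
  shows "\<forall>\<beta>\<in>mindex n k. c \<beta> = 0"
proof -
  define a where "a \<beta> = c \<beta> * (fact k / (\<Prod>i\<le>n. fact (\<beta> i)))" for \<beta>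
  have inj: "\<forall>\<sigma>\<in>mindex n k. \<forall>\<tau>\<in>mindex n k. (\<forall>i\<in>{1..n}. \<sigma> i = \<tau> i) \<longrightarrow> \<sigma> = \<tau>"
  proof (intro ballI impI)
    fix \<sigma> \<tau> assume st: "\<sigma> \<in> mindex n k" "\<tau> \<in> mindex n k" "\<forall>i\<in>{1..n}. \<sigma> i = \<tau> i"
    have "(\<Sum>i\<in>{1..n}. \<sigma> i) = (\<Sum>i\<in>{1..n}. \<tau> i)" using st(3) by simp
    hence 0: "\<sigma> 0 = \<tau> 0" using mindex_0_eq[OF st(1)] mindex_0_eq[OF st(2)] by simp
    show "\<sigma> = \<tau>"
    proof
      fix i show "\<sigma> i = \<tau> i"
      proof (cases "i = 0")
        case True thus ?thesis using 0 by simp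
      next
        case False
        show ?thesis
        proof (cases "i \<le> n")
          case True thus ?thesis using st(3) False by auto
        next
          case False thus ?thesis using st(1,2) by (auto simp: mindex_def)
        qed
      qed
    qed
  qed
  have van: "\<forall>y. (\<forall>i\<in>{1..n}. y i > 0) \<longrightarrow> (\<Sum>\<sigma>\<in>mindex n k. a \<sigma> * (\<Prod>i\<in>{1..n}. y i ^ \<sigma> i)) = 0"
  proof (intro allI impI)
    fix y :: "nat \<Rightarrow> real" assume yp: "\<forall>i\<in>{1..n}. y i > 0"
    define S where "S = (\<Sum>j\<in>{1..n}. y j)"
    have S0: "S \<ge> 0" unfolding S_def using yp by (intro sum_nonneg) (auto intro: less_imp_le)
    hence S1: "1 + S \<noteq> 0" by simp
    define x where "x = (\<lambda>i. if i \<in> {1..n} then y i / (1 + S) else 0)"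
    have b0: "bary n x 0 = 1 / (1 + S)"
    proof -
      have "(\<Sum>j\<in>{1..n}. x j) = S / (1 + S)"
        unfolding x_def S_def by (simp add: sum_divide_distrib)
      thus ?thesis unfolding bary_def using S1 by (simp add: field_simps)
    qed
    have bi: "bary n x i = y i * (1 / (1 + S))" if "i \<in> {1..n}" for i
      using that unfolding bary_def x_def by simp
    have pe: "(\<Prod>i\<le>n. bary n x i ^ \<beta> i) = (1 / (1 + S)) ^ k * (\<Prod>i\<in>{1..n}. y i ^ \<beta> i)"
      if b: "\<beta> \<in> mindex n k" for \<beta>
    proof -
      have "(\<Prod>i\<le>n. bary n x i ^ \<beta> i) = bary n x 0 ^ \<beta> 0 * (\<Prod>i\<in>{1..n}. bary n x i ^ \<beta> i)"
        unfolding atMost_split0 by simp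
      also have "(\<Prod>i\<in>{1..n}. bary n x i ^ \<beta> i) = (\<Prod>i\<in>{1..n}. y i ^ \<beta> i * (1 / (1 + S)) ^ \<beta> i)"
        by (intro prod.cong refl) (simp add: bi power_mult_distrib[symmetric])
      also have "\<dots> = (\<Prod>i\<in>{1..n}. y i ^ \<beta> i) * (1 / (1 + S)) ^ (\<Sum>i\<in>{1..n}. \<beta> i)"
        by (simp add: prod.distrib power_sum)
      finally show ?thesis using mindex_0_eq[OF b]
        by (simp add: b0 power_add[symmetric])
    qed
    have "0 = (\<Sum>\<beta>\<in>mindex n k. c \<beta> * bern n k \<beta> x)" using z by simp
    also have "\<dots> = (\<Sum>\<beta>\<in>mindex n k. (1 / (1 + S)) ^ k * (a \<beta> * (\<Prod>i\<in>{1..n}. y i ^ \<beta> i)))"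
      by (intro sum.cong refl) (simp add: bern_def pe a_def)
    also have "\<dots> = (1 / (1 + S)) ^ k * (\<Sum>\<beta>\<in>mindex n k. a \<beta> * (\<Prod>i\<in>{1..n}. y i ^ \<beta> i))"
      by (simp add: sum_distrib_left)
    finally show "(\<Sum>\<sigma>\<in>mindex n k. a \<sigma> * (\<Prod>i\<in>{1..n}. y i ^ \<sigma> i)) = 0" using S1 by simp
  qed
  have "\<forall>\<sigma>\<in>mindex n k. a \<sigma> = 0" by (rule mpoly_zero[OF finite_mindex inj van])
  moreover have "fact k / (\<Prod>i\<le>n. fact (\<beta> i)) \<noteq> (0::real)" for \<beta>
    by (simp add: prod_zero_iff)
  ultimately show ?thesis unfolding a_def by auto
qed



definition rep :: "nat \<Rightarrow> nat \<Rightarrow> ((nat \<Rightarrow> real) \<Rightarrow> real) \<Rightarrow> ((nat \<Rightarrow> nat) \<Rightarrow> real) \<Rightarrow> bool" where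
  "rep n k f c \<longleftrightarrow> (\<forall>\<beta>. \<beta> \<notin> mindex n k \<longrightarrow> c \<beta> = 0) \<and> (\<forall>x. f x = (\<Sum>\<beta>\<in>mindex n k. c \<beta> * bern n k \<beta> x))"

lemma rep_unique: assumes "rep n k f c" "rep n k f c'" shows "c' = c"
proof
  fix \<beta>
  have "\<forall>x. (\<Sum>\<beta>\<in>mindex n k. (c' \<beta> - c \<beta>) * bern n k \<beta> x) = 0"
    using assms unfolding rep_def by (simp add: left_diff_distrib sum_subtractf)
  hence "\<forall>\<beta>\<in>mindex n k. c' \<beta> - c \<beta> = 0" by (rule bern_unique)
  thus "c' \<beta> = c \<beta>" using assms unfolding rep_def by (cases "\<beta> \<in> mindex n k") auto
qed

lemma bcoef_eq: assumes "rep n k f c" shows "bcoef n k f = c"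
  unfolding bcoef_def
proof (rule the_equality)
  show "(\<forall>\<alpha>. \<alpha> \<notin> mindex n k \<longrightarrow> c \<alpha> = 0) \<and> (\<forall>x. f x = (\<Sum>\<alpha>\<in>mindex n k. c \<alpha> * bern n k \<alpha> x))"
    using assms unfolding rep_def .
  fix b assume "(\<forall>\<alpha>. \<alpha> \<notin> mindex n k \<longrightarrow> b \<alpha> = 0) \<and> (\<forall>x. f x = (\<Sum>\<alpha>\<in>mindex n k. b \<alpha> * bern n k \<alpha> x))"
  hence "rep n k f b" unfolding rep_def .
  thus "b = c" using rep_unique[OF assms] by blast
qed

lemma rep_bcoef: assumes "rep n k f c" shows "rep n k f (bcoef n k f)"
  using assms bcoef_eq by simp

definition mulc :: "nat \<Rightarrow> nat \<Rightarrow> nat \<Rightarrow> ((nat \<Rightarrow> nat) \<Rightarrow> real) \<Rightarrow> (nat \<Rightarrow> nat) \<Rightarrow> real" where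
  "mulc n k i c = (\<lambda>\<beta>. if \<beta> \<in> mindex n (Suc k) then real (\<beta> i) / real (Suc k) * c (sb \<beta> i) else 0)"

lemma rep_mul:
  assumes i: "i \<le> n" and r: "rep n k f c"
  shows "rep n (Suc k) (\<lambda>x. bary n x i * f x) (mulc n k i c)"
  unfolding rep_def
proof (intro conjI allI impI)
  fix \<beta> assume "\<beta> \<notin> mindex n (Suc k)" thus "mulc n k i c \<beta> = 0" unfolding mulc_def by simp
next
  fix x
  define T where "T = bary n x"
  have "bary n x i * f x = (\<Sum>\<beta>\<in>mindex n k. c \<beta> * (T i * Bk n k \<beta> T))"
    using r unfolding rep_def T_def bern_Bk by (simp add: sum_distrib_left mult.left_commute)
  also have "\<dots> = (\<Sum>\<gamma>\<in>mindex n k. real (Suc (\<gamma> i)) * (c (sb (ad \<gamma> i) i) * Bk n (Suc k) (ad \<gamma> i) T / real (Suc k)))"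
    by (intro sum.cong refl) (simp add: Bk_step[OF i])
  also have "\<dots> = (\<Sum>\<beta>\<in>mindex n (Suc k). real (\<beta> i) * (c (sb \<beta> i) * Bk n (Suc k) \<beta> T / real (Suc k)))"
    by (rule sum_reindex_ad[OF i])
  also have "\<dots> = (\<Sum>\<beta>\<in>mindex n (Suc k). mulc n k i c \<beta> * bern n (Suc k) \<beta> x)"
    by (intro sum.cong refl) (simp add: mulc_def bern_Bk T_def)
  finally show "bary n x i * f x = (\<Sum>\<beta>\<in>mindex n (Suc k). mulc n k i c \<beta> * bern n (Suc k) \<beta> x)" .
qed

lemma rep_add: "rep n k f c \<Longrightarrow> rep n k g d \<Longrightarrow> rep n k (\<lambda>x. f x + g x) (\<lambda>\<beta>. c \<beta> + d \<beta>)"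
  unfolding rep_def by (simp add: distrib_right sum.distrib)

lemma rep_scale: "rep n k f c \<Longrightarrow> rep n k (\<lambda>x. a * f x) (\<lambda>\<beta>. a * c \<beta>)"
  unfolding rep_def by (simp add: sum_distrib_left mult.assoc)

lemma rep_zero: "rep n k (\<lambda>x. 0) (\<lambda>\<beta>. 0)"
  unfolding rep_def by simp

lemma rep_sum:
  assumes "finite I" "\<forall>i\<in>I. rep n k (f i) (c i)"
  shows "rep n k (\<lambda>x. \<Sum>i\<in>I. f i x) (\<lambda>\<beta>. \<Sum>i\<in>I. c i \<beta>)"
  using assms
proof (induction I rule: finite_induct)
  case empty thus ?case using rep_zero by simp
next
  case (insert a I)
  thus ?case using rep_add[of n k "f a" "c a" "\<lambda>x. \<Sum>i\<in>I. f i x" "\<lambda>\<beta>. \<Sum>i\<in>I. c i \<beta>"] by simp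
qed

lemma sum_bary: "(\<Sum>i\<le>n. bary n x i) = 1"
  unfolding atMost_split0 bary_def by simp

definition elevc :: "nat \<Rightarrow> nat \<Rightarrow> ((nat \<Rightarrow> nat) \<Rightarrow> real) \<Rightarrow> (nat \<Rightarrow> nat) \<Rightarrow> real" where
  "elevc n k c = (\<lambda>\<beta>. \<Sum>i\<le>n. mulc n k i c \<beta>)"

lemma rep_elev: assumes "rep n k f c" shows "rep n (Suc k) f (elevc n k c)"
proof -
  have "rep n (Suc k) (\<lambda>x. \<Sum>i\<le>n. bary n x i * f x) (\<lambda>\<beta>. \<Sum>i\<le>n. mulc n k i c \<beta>)"
    by (rule rep_sum) (auto intro: rep_mul assms)
  moreover have "(\<lambda>x. \<Sum>i\<le>n. bary n x i * f x) = f"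
    by (simp add: sum_distrib_right[symmetric] sum_bary)
  ultimately show ?thesis unfolding elevc_def by simp
qed

lemma reps_mono: assumes "rep n k f c" "k \<le> k'" shows "\<exists>c'. rep n k' f c'"
  using assms(2)
proof (induction k' rule: dec_induct)
  case base thus ?case using assms(1) by blast
next
  case (step m) thus ?case using rep_elev by blast
qed

lemma rep_const: "rep n 0 (\<lambda>x. a) (\<lambda>\<beta>. if \<beta> \<in> mindex n 0 then a else 0)"
  unfolding rep_def mindex_0 bern_def by simp

lemma rep_pow:
  assumes "1 \<le> a" "a \<le> n" "rep n k f c"
  shows "\<exists>c'. rep n (k + r) (\<lambda>x. x a ^ r * f x) c'"
proof (induction r)
  case 0 thus ?case using assms(3) by (simp, blast)
next
  case (Suc r)
  then obtain c' where "rep n (k + r) (\<lambda>x. x a ^ r * f x) c'" by blast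
  from rep_mul[OF assms(2) this]
  have "rep n (Suc (k + r)) (\<lambda>x. bary n x a * (x a ^ r * f x)) (mulc n (k + r) a c')" .
  moreover have "bary n x a = x a" for x using assms(1) by (simp add: bary_def)
  ultimately show ?case by (auto simp: mult.assoc)
qed

lemma rep_monom:
  assumes "finite A" "A \<subseteq> {1..n}"
  shows "\<exists>c. rep n (\<Sum>i\<in>A. \<beta> i) (\<lambda>x. \<Prod>i\<in>A. x i ^ \<beta> i) c"
  using assms
proof (induction A rule: finite_induct)
  case empty thus ?case using rep_const[of n 1] by auto
next
  case (insert a A)
  then obtain c where "rep n (\<Sum>i\<in>A. \<beta> i) (\<lambda>x. \<Prod>i\<in>A. x i ^ \<beta> i) c" by auto
  from rep_pow[OF _ _ this, of a "\<beta> a"] insert.prems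
  obtain c' where "rep n ((\<Sum>i\<in>A. \<beta> i) + \<beta> a) (\<lambda>x. x a ^ \<beta> a * (\<Prod>i\<in>A. x i ^ \<beta> i)) c'" by auto
  thus ?case using insert.hyps by (auto simp: add.commute)
qed

lemma is_poly_rep: assumes "is_poly n l P" shows "\<exists>c. rep n l P c"
proof -
  obtain a where a: "\<forall>x. P x = (\<Sum>\<beta>\<in>monoms n l. a \<beta> * (\<Prod>i\<in>{1..n}. x i ^ \<beta> i))"
    using assms unfolding is_poly_def by blast
  have each: "\<forall>\<beta>\<in>monoms n l. \<exists>c. rep n l (\<lambda>x. a \<beta> * (\<Prod>i\<in>{1..n}. x i ^ \<beta> i)) c"
  proof
    fix \<beta> assume "\<beta> \<in> monoms n l"
    hence le: "(\<Sum>i\<in>{1..n}. \<beta> i) \<le> l" unfolding monoms_def by simp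
    obtain c where "rep n (\<Sum>i\<in>{1..n}. \<beta> i) (\<lambda>x. \<Prod>i\<in>{1..n}. x i ^ \<beta> i) c"
      using rep_monom[of "{1..n}" n \<beta>] by auto
    then obtain c' where "rep n l (\<lambda>x. \<Prod>i\<in>{1..n}. x i ^ \<beta> i) c'" using reps_mono le by blast
    thus "\<exists>c. rep n l (\<lambda>x. a \<beta> * (\<Prod>i\<in>{1..n}. x i ^ \<beta> i)) c" using rep_scale by blast
  qed
  then obtain cc where cc: "\<forall>\<beta>\<in>monoms n l. rep n l (\<lambda>x. a \<beta> * (\<Prod>i\<in>{1..n}. x i ^ \<beta> i)) (cc \<beta>)"
    by metis
  show ?thesis
  proof (cases "finite (monoms n l)")
    case True
    from rep_sum[OF True cc] have "rep n l (\<lambda>x. \<Sum>\<beta>\<in>monoms n l. a \<beta> * (\<Prod>i\<in>{1..n}. x i ^ \<beta> i)) (\<lambda>\<gamma>. \<Sum>\<beta>\<in>monoms n l. cc \<beta> \<gamma>)" .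
    moreover have "(\<lambda>x. \<Sum>\<beta>\<in>monoms n l. a \<beta> * (\<Prod>i\<in>{1..n}. x i ^ \<beta> i)) = P" using a by auto
    ultimately show ?thesis by auto
  next
    case False
    hence "P = (\<lambda>x. 0)" using a by auto
    thus ?thesis using rep_zero by blast
  qed
qed



definition Qf :: "nat \<Rightarrow> (nat \<Rightarrow> nat) \<Rightarrow> ((nat \<Rightarrow> nat) \<Rightarrow> real) \<Rightarrow> (nat \<Rightarrow> real) \<Rightarrow> real" where
  "Qf n \<gamma> h d = (\<Sum>i\<le>n. \<Sum>j\<le>n. d i * d j * h (madd3 \<gamma> i j))"

lemma madd3_ad: "madd3 \<gamma> i j = ad (ad \<gamma> i) j"
  unfolding madd3_def ad_def by auto

lemma madd3_in: "\<gamma> \<in> mindex n K \<Longrightarrow> i \<le> n \<Longrightarrow> j \<le> n \<Longrightarrow> madd3 \<gamma> i j \<in> mindex n (Suc (Suc K))"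
  unfolding madd3_ad by (intro ad_in) auto

lemma madd3_comm: "madd3 \<gamma> i j = madd3 \<gamma> j i"
  unfolding madd3_def by auto

lemma dsum_split:
  fixes d :: "nat \<Rightarrow> real"
  assumes "(\<Sum>i\<le>n. d i) = 0"
  shows "(\<Sum>i\<le>n. \<Sum>j\<le>n. d i * d j * (P i + R j + S i j)) = (\<Sum>i\<le>n. \<Sum>j\<le>n. d i * d j * S i j)"
proof -
  have "(\<Sum>i\<le>n. \<Sum>j\<le>n. d i * d j * (P i + R j + S i j))
      = (\<Sum>i\<le>n. d i * P i * (\<Sum>j\<le>n. d j)) + (\<Sum>i\<le>n. d i * (\<Sum>j\<le>n. d j * R j)) + (\<Sum>i\<le>n. \<Sum>j\<le>n. d i * d j * S i j)"
    by (simp add: distrib_left sum.distrib sum_distrib_left algebra_simps)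
  also have "(\<Sum>i\<le>n. d i * (\<Sum>j\<le>n. d j * R j)) = (\<Sum>i\<le>n. d i) * (\<Sum>j\<le>n. d j * R j)"
    by (simp add: sum_distrib_right)
  finally show ?thesis using assms by simp
qed

lemma swap3: "(\<Sum>i\<in>A. \<Sum>j\<in>B. \<Sum>m\<in>C. F i j m) = (\<Sum>m\<in>C. \<Sum>i\<in>A. \<Sum>j\<in>B. F i j m)"
proof -
  have "(\<Sum>i\<in>A. \<Sum>j\<in>B. \<Sum>m\<in>C. F i j m) = (\<Sum>i\<in>A. \<Sum>m\<in>C. \<Sum>j\<in>B. F i j m)"
    by (rule sum.cong[OF refl], rule sum.swap)
  also have "\<dots> = (\<Sum>m\<in>C. \<Sum>i\<in>A. \<Sum>j\<in>B. F i j m)" by (rule sum.swap)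
  finally show ?thesis .
qed

lemma Q_elev:
  assumes g: "\<gamma> \<in> mindex n K" and d: "(\<Sum>i\<le>n. d i) = 0"
  shows "Qf n \<gamma> (elevc n (Suc K) c) d = (\<Sum>m\<le>n. real (\<gamma> m) / real (Suc (Suc K)) * Qf n (sb \<gamma> m) c d)"
proof -
  define k where "k = Suc (Suc K)"
  have e: "elevc n (Suc K) c (madd3 \<gamma> i j) =
      (\<Sum>m\<le>n. real (\<gamma> m) / real k * c (madd3 (sb \<gamma> m) i j)) + c (ad \<gamma> i) / real k + c (ad \<gamma> j) / real k"
    if ij: "i \<le> n" "j \<le> n" for i j
  proof -
    have mem: "madd3 \<gamma> i j \<in> mindex n (Suc (Suc K))" using madd3_in g ij by blast
    have "elevc n (Suc K) c (madd3 \<gamma> i j) = (\<Sum>m\<le>n. real (madd3 \<gamma> i j m) / real k * c (sb (madd3 \<gamma> i j) m))"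
      unfolding elevc_def mulc_def k_def using mem by simp
    also have "\<dots> = (\<Sum>m\<le>n. real (\<gamma> m) / real k * c (madd3 (sb \<gamma> m) i j)
                    + (if m = j then c (ad \<gamma> i) / real k else 0) + (if m = i then c (ad \<gamma> j) / real k else 0))"
    proof (intro sum.cong refl)
      fix m assume "m \<in> {..n}"
      have a: "real (\<gamma> m) * c (sb (madd3 \<gamma> i j) m) = real (\<gamma> m) * c (madd3 (sb \<gamma> m) i j)"
        by (cases "\<gamma> m = 0") (auto simp: sb_def madd3_def uvec_def intro!: arg_cong[where f=c])
      have b: "sb (madd3 \<gamma> i j) i = ad \<gamma> j" "sb (madd3 \<gamma> i j) j = ad \<gamma> i"
        by (auto simp: sb_def madd3_def ad_def uvec_def)
      show "real (madd3 \<gamma> i j m) / real k * c (sb (madd3 \<gamma> i j) m) =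
          real (\<gamma> m) / real k * c (madd3 (sb \<gamma> m) i j) + (if m = j then c (ad \<gamma> i) / real k else 0) +
          (if m = i then c (ad \<gamma> j) / real k else 0)"
        using a b by (auto simp: madd3_def uvec_def add_divide_distrib distrib_right)
    qed
    also have "\<dots> = (\<Sum>m\<le>n. real (\<gamma> m) / real k * c (madd3 (sb \<gamma> m) i j)) + c (ad \<gamma> i) / real k + c (ad \<gamma> j) / real k"
      using ij by (simp add: sum.distrib)
    finally show ?thesis .
  qed
  have "Qf n \<gamma> (elevc n (Suc K) c) d = (\<Sum>i\<le>n. \<Sum>j\<le>n. d i * d j *
      (c (ad \<gamma> i) / real k + c (ad \<gamma> j) / real k + (\<Sum>m\<le>n. real (\<gamma> m) / real k * c (madd3 (sb \<gamma> m) i j))))"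
    unfolding Qf_def by (intro sum.cong refl) (simp add: e add.commute add.left_commute)
  also have "\<dots> = (\<Sum>i\<le>n. \<Sum>j\<le>n. d i * d j * (\<Sum>m\<le>n. real (\<gamma> m) / real k * c (madd3 (sb \<gamma> m) i j)))"
    by (rule dsum_split[OF d])
  also have "\<dots> = (\<Sum>i\<le>n. \<Sum>j\<le>n. \<Sum>m\<le>n. d i * d j * (real (\<gamma> m) / real k * c (madd3 (sb \<gamma> m) i j)))"
    by (simp only: sum_distrib_left)
  also have "\<dots> = (\<Sum>m\<le>n. \<Sum>i\<le>n. \<Sum>j\<le>n. d i * d j * (real (\<gamma> m) / real k * c (madd3 (sb \<gamma> m) i j)))"
    by (rule swap3)
  also have "\<dots> = (\<Sum>m\<le>n. real (\<gamma> m) / real k * Qf n (sb \<gamma> m) c d)"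
    unfolding Qf_def sum_distrib_left by (intro sum.cong refl) (simp only: mult_ac)
  finally show ?thesis unfolding k_def .
qed

definition nx :: "nat \<Rightarrow> nat \<Rightarrow> nat" where "nx n m = (if m < n then Suc m else 0)"

lemma prv_le: "a \<le> n \<Longrightarrow> prv n a \<le> n" unfolding prv_def by auto
lemma nx_le: "a \<le> n \<Longrightarrow> nx n a \<le> n" unfolding nx_def by auto
lemma nx_prv: "a \<le> n \<Longrightarrow> nx n (prv n a) = a" unfolding nx_def prv_def by auto
lemma prv_nx: "a \<le> n \<Longrightarrow> prv n (nx n a) = a" unfolding nx_def prv_def by auto

lemma sum_prv: "(\<Sum>a\<le>n. F (prv n a)) = (\<Sum>a\<le>n. F a)"
proof -
  have "bij_betw (prv n) {..n} {..n}"
    by (rule bij_betw_byWitness[where f'="nx n"]) (auto simp: nx_prv prv_nx prv_le nx_le)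
  thus ?thesis by (rule sum.reindex_bij_betw)
qed

lemma shift_sum:
  fixes x F :: "nat \<Rightarrow> real"
  shows "(\<Sum>a\<le>n. (x a - x (nx n a)) * F a) = (\<Sum>a\<le>n. x a * (F a - F (prv n a)))"
proof -
  have "(\<Sum>a\<le>n. x (nx n a) * F a) = (\<Sum>a\<le>n. x (nx n (prv n a)) * F (prv n a))"
    by (rule sum_prv[symmetric])
  also have "\<dots> = (\<Sum>a\<le>n. x a * F (prv n a))" by (intro sum.cong refl) (simp add: nx_prv)
  finally show ?thesis by (simp add: left_diff_distrib right_diff_distrib sum_subtractf)
qed

definition Ep :: "nat \<Rightarrow> (nat \<Rightarrow> nat) \<Rightarrow> ((nat \<Rightarrow> nat) \<Rightarrow> real) \<Rightarrow> nat \<Rightarrow> nat \<Rightarrow> real" where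
  "Ep n \<nu> b i j = b (madd3 \<nu> i (prv n j)) + b (madd3 \<nu> (prv n i) j) - b (madd3 \<nu> (prv n i) (prv n j)) - b (madd3 \<nu> i j)"

definition Psi :: "nat \<Rightarrow> (nat \<Rightarrow> real) \<Rightarrow> real" where
  "Psi n d = (\<Sum>a\<le>n. \<Sum>b\<le>n. if a < b then (\<Sum>m\<in>{a..<b}. d m)^2 else 0)"

lemma pair_sum:
  fixes S :: "nat \<Rightarrow> nat \<Rightarrow> real"
  assumes sym: "\<And>a b. S a b = S b a" and diag: "\<And>a. S a a = 0"
  shows "(\<Sum>a\<le>n. \<Sum>b\<le>n. S a b) = 2 * (\<Sum>a\<le>n. \<Sum>b\<le>n. if a < b then S a b else 0)"
proof -
  have sp: "S a b = (if a < b then S a b else 0) + (if b < a then S a b else 0)" for a b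
    using diag[of a] by (cases a b rule: linorder_cases) auto
  have "(\<Sum>a\<le>n. \<Sum>b\<le>n. if b < a then S a b else 0) = (\<Sum>b\<le>n. \<Sum>a\<le>n. if b < a then S a b else 0)"
    by (rule sum.swap)
  also have "\<dots> = (\<Sum>a\<le>n. \<Sum>b\<le>n. if a < b then S a b else 0)"
    by (intro sum.cong refl) (metis sym)
  finally have e: "(\<Sum>a\<le>n. \<Sum>b\<le>n. if b < a then S a b else 0) = (\<Sum>a\<le>n. \<Sum>b\<le>n. if a < b then S a b else 0)" .
  have "(\<Sum>a\<le>n. \<Sum>b\<le>n. S a b) = (\<Sum>a\<le>n. \<Sum>b\<le>n. if a < b then S a b else 0) + (\<Sum>a\<le>n. \<Sum>b\<le>n. if b < a then S a b else 0)"
    by (subst sp) (simp add: sum.distrib)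
  thus ?thesis using e by simp
qed

lemma I1:
  fixes d :: "nat \<Rightarrow> real"
  assumes d: "(\<Sum>i\<le>n. d i) = 0"
  shows "Qf n \<nu> b d = (\<Sum>a\<le>n. \<Sum>c\<le>n. if a < c then Ep n \<nu> b a c * (\<Sum>m\<in>{a..<c}. d m)^2 else 0)"
proof -
  define B where "B a c = b (madd3 \<nu> a c)" for a c
  have Bs: "B a c = B c a" for a c unfolding B_def using madd3_comm by metis
  define x where "x a = - (\<Sum>m\<in>{0..<a}. d m)" for a
  have dx: "d a = x a - x (nx n a)" if "a \<le> n" for a
  proof (cases "a < n")
    case True thus ?thesis unfolding x_def nx_def by simp
  next
    case False
    hence an: "a = n" using that by simp
    have "(\<Sum>m\<in>{0..<n}. d m) + d n = (\<Sum>m\<le>n. d m)"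
      by (simp add: atLeast0LessThan flip: lessThan_Suc_atMost)
    hence "(\<Sum>m\<in>{0..<n}. d m) + d n = 0" using d by simp
    thus ?thesis unfolding x_def nx_def an by simp
  qed
  define U where "U a c = B a c - B (prv n a) c - B a (prv n c) + B (prv n a) (prv n c)" for a c
  have Us: "U a c = U c a" for a c unfolding U_def using Bs by simp
  have row: "(\<Sum>c\<le>n. U a c) = 0" for a
  proof -
    have "(\<Sum>c\<le>n. U a c) = (\<Sum>c\<le>n. B a c - B (prv n a) c) - (\<Sum>c\<le>n. B a (prv n c) - B (prv n a) (prv n c))"
      unfolding U_def by (simp add: sum_subtractf[symmetric] algebra_simps)
    also have "(\<Sum>c\<le>n. B a (prv n c) - B (prv n a) (prv n c)) = (\<Sum>c\<le>n. B a c - B (prv n a) c)"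
      by (rule sum_prv)
    finally show ?thesis by simp
  qed
  have col: "(\<Sum>a\<le>n. U a c) = 0" for c using row[of c] Us by simp
  have step1: "Qf n \<nu> b d = (\<Sum>a\<le>n. \<Sum>c\<le>n. x a * x c * U a c)"
  proof -
    have "Qf n \<nu> b d = (\<Sum>a\<le>n. d a * (\<Sum>c\<le>n. d c * B a c))"
      unfolding Qf_def B_def by (simp add: sum_distrib_left mult.assoc)
    also have "\<dots> = (\<Sum>a\<le>n. (x a - x (nx n a)) * (\<Sum>c\<le>n. d c * B a c))"
      by (intro sum.cong refl) (simp add: dx)
    also have "\<dots> = (\<Sum>a\<le>n. x a * (\<Sum>c\<le>n. d c * (B a c - B (prv n a) c)))"
      by (subst shift_sum[where F="\<lambda>a. \<Sum>c\<le>n. d c * B a c"]) (simp add: sum_subtractf right_diff_distrib)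
    also have "\<dots> = (\<Sum>a\<le>n. x a * (\<Sum>c\<le>n. (x c - x (nx n c)) * (B a c - B (prv n a) c)))"
      by (intro sum.cong refl) (simp add: dx)
    also have "\<dots> = (\<Sum>a\<le>n. x a * (\<Sum>c\<le>n. x c * U a c))"
    proof (intro sum.cong refl)
      fix a
      have "(\<Sum>c\<le>n. (x c - x (nx n c)) * (B a c - B (prv n a) c)) = (\<Sum>c\<le>n. x c * U a c)"
        by (subst shift_sum[where F="\<lambda>c. B a c - B (prv n a) c"]) (simp add: U_def algebra_simps)
      thus "x a * (\<Sum>c\<le>n. (x c - x (nx n c)) * (B a c - B (prv n a) c)) = x a * (\<Sum>c\<le>n. x c * U a c)"
        by simp
    qed
    finally show ?thesis by (simp add: sum_distrib_left mult.assoc)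
  qed
  have step2: "(\<Sum>a\<le>n. \<Sum>c\<le>n. x a * x c * U a c) = - (1/2) * (\<Sum>a\<le>n. \<Sum>c\<le>n. U a c * (x a - x c)^2)"
  proof -
    have "(\<Sum>a\<le>n. \<Sum>c\<le>n. U a c * (x a - x c)^2)
        = (\<Sum>a\<le>n. x a ^ 2 * (\<Sum>c\<le>n. U a c)) + (\<Sum>a\<le>n. \<Sum>c\<le>n. U a c * x c ^ 2) - 2 * (\<Sum>a\<le>n. \<Sum>c\<le>n. x a * x c * U a c)"
      by (simp add: power2_diff algebra_simps sum.distrib sum_subtractf sum_distrib_left sum_distrib_right)
    also have "(\<Sum>a\<le>n. \<Sum>c\<le>n. U a c * x c ^ 2) = (\<Sum>c\<le>n. x c ^ 2 * (\<Sum>a\<le>n. U a c))"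
      by (subst sum.swap) (simp add: sum_distrib_left mult.commute)
    finally show ?thesis using row col by simp
  qed
  have step3: "(\<Sum>a\<le>n. \<Sum>c\<le>n. U a c * (x a - x c)^2) = 2 * (\<Sum>a\<le>n. \<Sum>c\<le>n. if a < c then U a c * (x a - x c)^2 else 0)"
    by (rule pair_sum) (simp_all add: Us power2_commute)
  have xd: "x a - x c = (\<Sum>m\<in>{a..<c}. d m)" if "a < c" for a c
    unfolding x_def using sum_diff_nat_ivl[of 0 a c d] that by simp
  have EU: "Ep n \<nu> b a c = - U a c" for a c unfolding Ep_def U_def B_def by simp
  show ?thesis
    unfolding step1 step2 step3
    by (simp add: sum_distrib_left xd EU if_distrib[where f="\<lambda>t. - t"] cong: if_cong)
qed

lemma Qf_sum: "finite A \<Longrightarrow> Qf n \<gamma> (\<lambda>\<beta>. \<Sum>a\<in>A. F a \<beta>) d = (\<Sum>a\<in>A. Qf n \<gamma> (F a) d)"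
  unfolding Qf_def
  by (induction A rule: finite_induct) (simp_all add: distrib_left sum.distrib)

lemma Qf_scale: "Qf n \<gamma> (\<lambda>\<beta>. a * h \<beta>) d = a * Qf n \<gamma> h d"
  unfolding Qf_def by (simp add: sum_distrib_left algebra_simps)

lemma Qf_diff: "Qf n \<gamma> (\<lambda>\<beta>. h1 \<beta> - h2 \<beta>) d = Qf n \<gamma> h1 d - Qf n \<gamma> h2 d"
  unfolding Qf_def by (simp add: right_diff_distrib sum_subtractf)

lemma Qf_zero: "Qf n \<gamma> (\<lambda>\<beta>. 0) d = 0"
  unfolding Qf_def by simp

lemma QL:
  fixes d :: "nat \<Rightarrow> real"
  assumes I: "I \<subseteq> {..n}" and d: "(\<Sum>i\<le>n. d i) = 0"
  shows "Qf n \<gamma> (\<lambda>\<beta>. (\<Sum>m\<in>I. real (\<beta> m))^2) d = 2 * (\<Sum>m\<in>I. d m)^2"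
proof -
  have fI: "finite I" using I finite_subset by blast
  define Y where "Y = (\<Sum>m\<in>I. real (\<gamma> m))"
  define \<chi> where "\<chi> i = (if i \<in> I then 1 else (0::real))" for i
  have e: "(\<Sum>m\<in>I. real (madd3 \<gamma> i j m)) = Y + \<chi> i + \<chi> j" for i j
    unfolding madd3_def Y_def \<chi>_def uvec_def using fI
    by (simp add: sum.distrib of_nat_add if_distrib[where f=real] sum.delta cong: if_cong)
  have "Qf n \<gamma> (\<lambda>\<beta>. (\<Sum>m\<in>I. real (\<beta> m))^2) d =
      (\<Sum>i\<le>n. \<Sum>j\<le>n. d i * d j * ((Y^2 + 2*Y*\<chi> i + (\<chi> i)^2) + (2*Y*\<chi> j + (\<chi> j)^2) + 2 * \<chi> i * \<chi> j))"
    unfolding Qf_def e by (intro sum.cong refl) (simp add: power2_sum algebra_simps)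
  also have "\<dots> = (\<Sum>i\<le>n. \<Sum>j\<le>n. d i * d j * (2 * \<chi> i * \<chi> j))"
    by (rule dsum_split[OF d])
  also have "\<dots> = 2 * (\<Sum>i\<le>n. d i * \<chi> i) * (\<Sum>j\<le>n. d j * \<chi> j)"
    by (simp add: sum_distrib_left sum_distrib_right algebra_simps)
  also have "(\<Sum>i\<le>n. d i * \<chi> i) = (\<Sum>m\<in>I. d m)"
    unfolding \<chi>_def using I by (simp add: if_distrib[where f="\<lambda>t. d _ * t"] sum.inter_restrict[symmetric] Int_absorb1 cong: if_cong)
  finally show ?thesis by (simp add: power2_eq_square)
qed

definition psi :: "nat \<Rightarrow> (nat \<Rightarrow> nat) \<Rightarrow> real" where
  "psi n \<beta> = (\<Sum>a\<le>n. \<Sum>b\<le>n. if a < b then (1/2) * (\<Sum>m\<in>{a..<b}. real (\<beta> m))^2 else 0)"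

lemma Qf_psi: assumes d: "(\<Sum>i\<le>n. d i) = 0" shows "Qf n \<gamma> (psi n) d = Psi n d"
proof -
  have "Qf n \<gamma> (psi n) d = (\<Sum>a\<le>n. \<Sum>b\<le>n. Qf n \<gamma> (\<lambda>\<beta>. if a < b then (1/2) * (\<Sum>m\<in>{a..<b}. real (\<beta> m))^2 else 0) d)"
    unfolding psi_def by (simp add: Qf_sum)
  also have "\<dots> = Psi n d"
    unfolding Psi_def
  proof (intro sum.cong refl)
    fix a b assume b: "b \<in> {..n}"
    show "Qf n \<gamma> (\<lambda>\<beta>. if a < b then 1 / 2 * (\<Sum>m = a..<b. real (\<beta> m))\<^sup>2 else 0) d =
          (if a < b then (\<Sum>m = a..<b. d m)\<^sup>2 else 0)"
    proof (cases "a < b")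
      case True
      have "{a..<b} \<subseteq> {..n}" using b by auto
      thus ?thesis using True QL[OF _ d] Qf_scale[where a="1/2" and n=n and \<gamma>=\<gamma> and h="\<lambda>\<beta>. (\<Sum>m = a..<b. real (\<beta> m))\<^sup>2" and d=d] by simp
    next
      case False thus ?thesis using Qf_zero by simp
    qed
  qed
  finally show ?thesis .
qed

lemma Psi_nonneg: "Psi n d \<ge> 0"
  unfolding Psi_def by (intro sum_nonneg) auto

lemma mindex_unique: "\<beta> \<in> mindex n a \<Longrightarrow> \<beta> \<in> mindex n b \<Longrightarrow> a = b"
  unfolding mindex_def by auto

lemma Qf_outside: assumes "\<forall>\<beta>. \<beta> \<notin> mindex n k \<longrightarrow> h \<beta> = 0" "\<gamma> \<in> mindex n K" "k \<noteq> Suc (Suc K)"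
  shows "Qf n \<gamma> h d = 0"
proof -
  have "h (madd3 \<gamma> i j) = 0" if "i \<le> n" "j \<le> n" for i j
    using madd3_in[OF assms(2) that] assms(1,3) mindex_unique by metis
  thus ?thesis unfolding Qf_def by simp
qed

lemma Q_chain:
  fixes cc :: "nat \<Rightarrow> (nat \<Rightarrow> nat) \<Rightarrow> real" and M :: real
  assumes supp: "\<forall>\<beta>. \<beta> \<notin> mindex n l \<longrightarrow> cc l \<beta> = 0"
    and el: "\<forall>k\<ge>l. cc (Suc k) = elevc n k (cc k)"
    and M0: "M \<ge> 0"
    and EM: "\<forall>\<nu>\<in>mindex n (l-2). \<forall>i j. i < j \<longrightarrow> j \<le> n \<longrightarrow> \<bar>Ep n \<nu> (cc l) i j\<bar> \<le> M"
    and kl: "l \<le> k"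
  shows "\<forall>\<gamma>\<in>mindex n (k-2). \<forall>d. (\<Sum>i\<le>n. d i) = 0 \<longrightarrow>
           Qf n \<gamma> (cc k) d \<le> real (l*(l-1)) / real (k*(k-1)) * M * Psi n d"
  using kl
proof (induction k rule: dec_induct)
  case base
  show ?case
  proof (intro ballI allI impI)
    fix \<gamma> d assume g: "\<gamma> \<in> mindex n (l-2)" and d: "(\<Sum>i\<le>n. d i) = (0::real)"
    show "Qf n \<gamma> (cc l) d \<le> real (l*(l-1)) / real (l*(l-1)) * M * Psi n d"
    proof (cases "l \<ge> 2")
      case True
      hence nz: "real (l*(l-1)) \<noteq> 0" by simp
      have "Qf n \<gamma> (cc l) d = (\<Sum>a\<le>n. \<Sum>c\<le>n. if a < c then Ep n \<gamma> (cc l) a c * (\<Sum>m\<in>{a..<c}. d m)^2 else 0)"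
        by (rule I1[OF d])
      also have "\<dots> \<le> (\<Sum>a\<le>n. \<Sum>c\<le>n. if a < c then M * (\<Sum>m\<in>{a..<c}. d m)^2 else 0)"
      proof (intro sum_mono)
        fix a c assume c: "c \<in> {..n}"
        show "(if a < c then Ep n \<gamma> (cc l) a c * (\<Sum>m\<in>{a..<c}. d m)^2 else 0) \<le> (if a < c then M * (\<Sum>m\<in>{a..<c}. d m)^2 else 0)"
        proof (cases "a < c")
          case True
          hence "Ep n \<gamma> (cc l) a c \<le> M" using EM g c by fastforce
          thus ?thesis using True by (simp add: mult_right_mono)
        qed simp
      qed
      also have "\<dots> = M * Psi n d" unfolding Psi_def by (simp add: sum_distrib_left if_distrib[where f="\<lambda>t. M * t"] cong: if_cong)
      finally show ?thesis using nz by simp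
    next
      case False
      hence "Qf n \<gamma> (cc l) d = 0" using Qf_outside[OF supp g] by simp
      thus ?thesis using False by simp
    qed
  qed
next
  case (step k)
  show ?case
  proof (intro ballI allI impI)
    fix \<gamma> d assume g: "\<gamma> \<in> mindex n (Suc k - 2)" and d: "(\<Sum>i\<le>n. d i) = (0::real)"
    have rhs0: "0 \<le> real (l * (l - 1)) / real (Suc k * (Suc k - 1)) * M * Psi n d"
      using M0 Psi_nonneg by simp
    show "Qf n \<gamma> (cc (Suc k)) d \<le> real (l * (l - 1)) / real (Suc k * (Suc k - 1)) * M * Psi n d"
    proof (cases k)
      case 0
      have "\<forall>\<beta>. \<beta> \<notin> mindex n (Suc k) \<longrightarrow> cc (Suc k) \<beta> = 0"
        using el step.hyps unfolding elevc_def mulc_def by simp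
      hence "Qf n \<gamma> (cc (Suc k)) d = 0" using Qf_outside g 0 by simp
      thus ?thesis using rhs0 by simp
    next
      case (Suc K)
      have gK: "\<gamma> \<in> mindex n K" using g Suc by simp
      have "Qf n \<gamma> (cc (Suc k)) d = (\<Sum>m\<le>n. real (\<gamma> m) / real (Suc (Suc K)) * Qf n (sb \<gamma> m) (cc k) d)"
        using el step.hyps Q_elev[OF gK d, of "cc k"] Suc by simp
      also have "\<dots> \<le> (\<Sum>m\<le>n. real (\<gamma> m) / real (Suc (Suc K)) * (real (l*(l-1)) / real (k*(k-1)) * M * Psi n d))"
      proof (intro sum_mono)
        fix m assume m: "m \<in> {..n}"
        show "real (\<gamma> m) / real (Suc (Suc K)) * Qf n (sb \<gamma> m) (cc k) d
            \<le> real (\<gamma> m) / real (Suc (Suc K)) * (real (l*(l-1)) / real (k*(k-1)) * M * Psi n d)"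
        proof (cases "\<gamma> m = 0")
          case False
          hence "\<gamma> m \<ge> 1" by simp
          moreover have "\<gamma> m \<le> K" using mindex_le gK m by auto
          ultimately have K1: "K = Suc (K - 1)" by simp
          have "sb \<gamma> m \<in> mindex n (K - 1)"
            using sb_in[of \<gamma> n "K-1" m] gK K1 m \<open>\<gamma> m \<ge> 1\<close> by simp
          hence "sb \<gamma> m \<in> mindex n (k - 2)" using Suc by simp
          hence "Qf n (sb \<gamma> m) (cc k) d \<le> real (l*(l-1)) / real (k*(k-1)) * M * Psi n d"
            using step.IH d by blast
          thus ?thesis by (intro mult_left_mono) auto
        qed simp
      qed
      also have "\<dots> = real K / real (Suc (Suc K)) * (real (l*(l-1)) / real (k*(k-1)) * M * Psi n d)"
        using sum_mindex_size[OF gK] by (simp add: sum_divide_distrib[symmetric] sum_distrib_right[symmetric])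
      also have "\<dots> \<le> real (l * (l - 1)) / real (Suc k * (Suc k - 1)) * M * Psi n d"
      proof (cases "K = 0")
        case True thus ?thesis using rhs0 by simp
      next
        case False
        have "real K / real (Suc (Suc K)) * (real (l*(l-1)) / real (k*(k-1))) = real (l * (l - 1)) / real (Suc k * (Suc k - 1))"
        proof -
          have e1: "real (k*(k-1)) = (real K + 1) * real K" using Suc by (simp add: algebra_simps)
          have e2: "real (Suc k * (Suc k - 1)) = (real K + 2) * (real K + 1)" using Suc by (simp add: algebra_simps)
          have e3: "real (Suc (Suc K)) = real K + 2" by simp
          have K0: "real K \<noteq> 0" using False by simp
          show ?thesis unfolding e1 e2 e3 using K0 by (simp add: divide_simps)
        qed
        thus ?thesis by (metis mult.assoc order_refl)
      qed
      finally show ?thesis .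
    qed
  qed
qed



definition Dp :: "nat \<Rightarrow> (nat \<Rightarrow> real) \<Rightarrow> nat \<Rightarrow> ((nat \<Rightarrow> nat) \<Rightarrow> real) \<Rightarrow> (nat \<Rightarrow> nat) \<Rightarrow> real" where
  "Dp n T r h = (dc n T ^^ r) h"

lemma Dp_0[simp]: "Dp n T 0 h = h" unfolding Dp_def by simp
lemma Dp_Suc: "Dp n T (Suc r) h = dc n T (Dp n T r h)" unfolding Dp_def by simp
lemma Dp_Suc': "Dp n T (Suc r) h = Dp n T r (dc n T h)" unfolding Dp_def by (simp add: funpow_swap1)

lemma ev_Dp: "ev n k h T = Dp n T k h (\<lambda>_. 0)"
proof (induction k arbitrary: h)
  case 0 thus ?case by (simp add: ev_0)
next
  case (Suc k) thus ?case by (simp add: ev_dc Dp_Suc')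
qed

lemma dc_add_T: "dc n (\<lambda>i. u i + v i) h = (\<lambda>\<gamma>. dc n u h \<gamma> + dc n v h \<gamma>)"
  unfolding dc_def by (simp add: distrib_right sum.distrib)
lemma dc_scale_T: "dc n (\<lambda>i. s * u i) h = (\<lambda>\<gamma>. s * dc n u h \<gamma>)"
  unfolding dc_def by (simp add: sum_distrib_left mult.assoc)
lemma dc_add_h: "dc n T (\<lambda>\<beta>. f \<beta> + g \<beta>) = (\<lambda>\<gamma>. dc n T f \<gamma> + dc n T g \<gamma>)"
  unfolding dc_def by (simp add: distrib_left sum.distrib)
lemma dc_scale_h: "dc n T (\<lambda>\<beta>. s * f \<beta>) = (\<lambda>\<gamma>. s * dc n T f \<gamma>)"
  unfolding dc_def by (simp add: sum_distrib_left algebra_simps)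
lemma dc_sum_h: "finite A \<Longrightarrow> dc n T (\<lambda>\<beta>. \<Sum>x\<in>A. f x \<beta>) = (\<lambda>\<gamma>. \<Sum>x\<in>A. dc n T (f x) \<gamma>)"
  by (induction A rule: finite_induct) (simp_all add: dc_add_h, simp add: dc_def)

lemma Dp_add_h: "Dp n T r (\<lambda>\<beta>. f \<beta> + g \<beta>) = (\<lambda>\<gamma>. Dp n T r f \<gamma> + Dp n T r g \<gamma>)"
  by (induction r) (simp_all add: Dp_Suc dc_add_h)
lemma dc_diff_h: "dc n T (\<lambda>\<beta>. f \<beta> - g \<beta>) = (\<lambda>\<gamma>. dc n T f \<gamma> - dc n T g \<gamma>)"
  unfolding dc_def by (simp add: right_diff_distrib sum_subtractf)
lemma Dp_diff_h: "Dp n T r (\<lambda>\<beta>. f \<beta> - g \<beta>) = (\<lambda>\<gamma>. Dp n T r f \<gamma> - Dp n T r g \<gamma>)"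
  by (induction r) (simp_all add: Dp_Suc dc_diff_h)
lemma Dp_scale_h: "Dp n T r (\<lambda>\<beta>. s * f \<beta>) = (\<lambda>\<gamma>. s * Dp n T r f \<gamma>)"
  by (induction r) (simp_all add: Dp_Suc dc_scale_h)
lemma Dp_sum_h: "finite A \<Longrightarrow> Dp n T r (\<lambda>\<beta>. \<Sum>x\<in>A. f x \<beta>) = (\<lambda>\<gamma>. \<Sum>x\<in>A. Dp n T r (f x) \<gamma>)"
  by (induction r) (simp_all add: Dp_Suc dc_sum_h)
lemma Dp_scale_T: "Dp n (\<lambda>i. s * u i) r h = (\<lambda>\<gamma>. s ^ r * Dp n u r h \<gamma>)"
  by (induction r) (simp_all add: Dp_Suc dc_scale_T dc_scale_h mult.assoc)

lemma ad_comm: "ad (ad \<gamma> i) j = ad (ad \<gamma> j) i"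
  unfolding ad_def by auto

lemma dc_comm: "dc n a (dc n b h) = dc n b (dc n a h)"
proof
  fix \<gamma>
  have "dc n a (dc n b h) \<gamma> = (\<Sum>i\<le>n. \<Sum>j\<le>n. a i * b j * h (ad (ad \<gamma> i) j))"
    unfolding dc_def by (simp add: sum_distrib_left mult.assoc)
  also have "\<dots> = (\<Sum>j\<le>n. \<Sum>i\<le>n. a i * b j * h (ad (ad \<gamma> i) j))" by (rule sum.swap)
  also have "\<dots> = dc n b (dc n a h) \<gamma>"
    unfolding dc_def by (simp add: sum_distrib_left ad_comm mult_ac)
  finally show "dc n a (dc n b h) \<gamma> = dc n b (dc n a h) \<gamma>" .
qed

lemma Dp_comm: "dc n a (Dp n b r h) = Dp n b r (dc n a h)"
  by (induction r) (auto simp: Dp_Suc dc_comm[of n a b])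

lemma binom_Dp:
  "Dp n (\<lambda>i. u i + v i) K h = (\<lambda>\<gamma>. \<Sum>r\<le>K. real (K choose r) * Dp n u (K - r) (Dp n v r h) \<gamma>)"
proof (induction K)
  case 0 thus ?case by simp
next
  case (Suc K)
  define G where "G r = Dp n u (Suc K - r) (Dp n v r h)" for r
  have "Dp n (\<lambda>i. u i + v i) (Suc K) h = dc n (\<lambda>i. u i + v i) (\<lambda>\<gamma>. \<Sum>r\<le>K. real (K choose r) * Dp n u (K - r) (Dp n v r h) \<gamma>)"
    by (simp add: Dp_Suc Suc)
  also have "\<dots> = (\<lambda>\<gamma>. (\<Sum>r\<le>K. real (K choose r) * dc n u (Dp n u (K - r) (Dp n v r h)) \<gamma>)
                     + (\<Sum>r\<le>K. real (K choose r) * dc n v (Dp n u (K - r) (Dp n v r h)) \<gamma>))"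
    by (simp add: dc_add_T dc_sum_h dc_scale_h)
  also have "\<dots> = (\<lambda>\<gamma>. (\<Sum>r\<le>K. real (K choose r) * G r \<gamma>) + (\<Sum>r\<le>K. real (K choose r) * G (Suc r) \<gamma>))"
  proof -
    have "dc n u (Dp n u (K - r) (Dp n v r h)) = G r" if "r \<le> K" for r
      unfolding G_def using that by (simp add: Dp_Suc[symmetric] Suc_diff_le)
    moreover have "dc n v (Dp n u (K - r) (Dp n v r h)) = G (Suc r)" for r
      unfolding G_def by (simp add: Dp_comm Dp_Suc)
    ultimately show ?thesis by (intro ext arg_cong2[where f="(+)"] sum.cong) auto
  qed
  also have "\<dots> = (\<lambda>\<gamma>. \<Sum>r\<le>Suc K. real (Suc K choose r) * G r \<gamma>)"
  proof
    fix \<gamma>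
    have "(\<Sum>r\<le>Suc K. real (Suc K choose r) * G r \<gamma>) = G 0 \<gamma> + (\<Sum>r\<le>K. real (Suc K choose Suc r) * G (Suc r) \<gamma>)"
      by (subst sum.atMost_Suc_shift) simp
    also have "\<dots> = G 0 \<gamma> + (\<Sum>r\<le>K. real (K choose Suc r) * G (Suc r) \<gamma>) + (\<Sum>r\<le>K. real (K choose r) * G (Suc r) \<gamma>)"
      by (simp add: distrib_right sum.distrib)
    also have "G 0 \<gamma> + (\<Sum>r\<le>K. real (K choose Suc r) * G (Suc r) \<gamma>) = (\<Sum>r\<le>Suc K. real (K choose r) * G r \<gamma>)"
      by (subst sum.atMost_Suc_shift) simp
    also have "\<dots> = (\<Sum>r\<le>K. real (K choose r) * G r \<gamma>)" by simp
    finally show "(\<Sum>r\<le>K. real (K choose r) * G r \<gamma>) + (\<Sum>r\<le>K. real (K choose r) * G (Suc r) \<gamma>)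
        = (\<Sum>r\<le>Suc K. real (Suc K choose r) * G r \<gamma>)" by simp
  qed
  finally show ?case unfolding G_def .
qed

lemma Dp_nonpos:
  assumes T: "\<forall>i\<le>n. T i \<ge> 0"
  shows "(\<forall>\<beta>\<in>mindex n (s + r). f \<beta> \<le> 0) \<Longrightarrow> \<forall>\<gamma>\<in>mindex n s. Dp n T r f \<gamma> \<le> 0"
proof (induction r arbitrary: s)
  case 0 thus ?case by simp
next
  case (Suc r)
  show ?case
  proof
    fix \<gamma> assume g: "\<gamma> \<in> mindex n s"
    have "\<forall>\<gamma>\<in>mindex n (Suc s). Dp n T r f \<gamma> \<le> 0" using Suc.IH[of "Suc s"] Suc.prems by simp
    hence "\<forall>i\<le>n. Dp n T r f (ad \<gamma> i) \<le> 0" using ad_in[OF g] by blast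
    hence "(\<Sum>i\<le>n. T i * Dp n T r f (ad \<gamma> i)) \<le> 0"
      using T by (intro sum_nonpos) (simp add: mult_nonneg_nonpos)
    thus "Dp n T (Suc r) f \<gamma> \<le> 0" by (simp add: Dp_Suc dc_def)
  qed
qed

lemma dcdc_Qf: "dc n d (dc n d h) \<gamma> = Qf n \<gamma> h d"
  unfolding dc_def Qf_def madd3_ad by (simp add: sum_distrib_left mult.assoc)

lemma ad_madd3: "ad (madd3 \<gamma> i j) m = madd3 (ad \<gamma> m) i j"
  unfolding ad_def madd3_def by auto

lemma nsd_dc:
  assumes T: "\<forall>i\<le>n. T i \<ge> 0"
    and h: "\<forall>\<gamma>\<in>mindex n (Suc K). \<forall>d. (\<Sum>i\<le>n. d i) = 0 \<longrightarrow> Qf n \<gamma> h d \<le> 0"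
  shows "\<forall>\<gamma>\<in>mindex n K. \<forall>d. (\<Sum>i\<le>n. d i) = 0 \<longrightarrow> Qf n \<gamma> (dc n T h) d \<le> 0"
proof (intro ballI allI impI)
  fix \<gamma> d assume g: "\<gamma> \<in> mindex n K" and d: "(\<Sum>i\<le>n. d i) = (0::real)"
  have "Qf n \<gamma> (dc n T h) d = (\<Sum>i\<le>n. \<Sum>j\<le>n. \<Sum>m\<le>n. d i * d j * (T m * h (madd3 (ad \<gamma> m) i j)))"
    unfolding Qf_def dc_def by (simp add: sum_distrib_left ad_madd3)
  also have "\<dots> = (\<Sum>m\<le>n. \<Sum>i\<le>n. \<Sum>j\<le>n. d i * d j * (T m * h (madd3 (ad \<gamma> m) i j)))" by (rule swap3)
  also have "\<dots> = (\<Sum>m\<le>n. T m * Qf n (ad \<gamma> m) h d)"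
    unfolding Qf_def sum_distrib_left by (intro sum.cong refl) (simp only: mult_ac)
  also have "\<dots> \<le> 0"
    using T h ad_in[OF g] d by (intro sum_nonpos) (simp add: mult_nonneg_nonpos)
  finally show "Qf n \<gamma> (dc n T h) d \<le> 0" .
qed

lemma binom_sum1: "(\<Sum>r\<le>K. real (K choose r) * (1 - t) ^ (K - r) * t ^ r) = 1"
  using binomial_ring[of t "1 - t" K] by (simp add: mult_ac)

lemma binom_sum2: "(\<Sum>r\<le>K. real (K choose r) * (1 - t) ^ (K - r) * t ^ r * real r) = real K * t"
proof (cases K)
  case 0 thus ?thesis by simp
next
  case (Suc K')
  have "(\<Sum>r\<le>Suc K'. real (Suc K' choose r) * (1 - t) ^ (Suc K' - r) * t ^ r * real r)
      = (\<Sum>r\<le>K'. real (Suc K' choose Suc r) * (1 - t) ^ (K' - r) * t ^ Suc r * real (Suc r))"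
    by (subst sum.atMost_Suc_shift) simp
  also have "\<dots> = (\<Sum>r\<le>K'. real (Suc K') * t * (real (K' choose r) * (1 - t) ^ (K' - r) * t ^ r))"
  proof (intro sum.cong refl)
    fix r
    have "real (Suc K' choose Suc r) * real (Suc r) = real (Suc K') * real (K' choose r)"
      using Suc_times_binomial[of r K'] by (metis mult.commute of_nat_mult)
    hence eq: "real (Suc K' choose Suc r) * real (Suc r) = real (Suc K') * real (K' choose r)" .
    have "real (Suc K' choose Suc r) * (1 - t) ^ (K' - r) * t ^ Suc r * real (Suc r)
        = (real (Suc K' choose Suc r) * real (Suc r)) * (t * ((1 - t) ^ (K' - r) * t ^ r))"
      by (simp only: power_Suc mult_ac)
    also have "\<dots> = (real (Suc K') * real (K' choose r)) * (t * ((1 - t) ^ (K' - r) * t ^ r))"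
      by (simp only: eq)
    also have "\<dots> = real (Suc K') * t * (real (K' choose r) * (1 - t) ^ (K' - r) * t ^ r)"
      by (simp only: mult_ac)
    finally show "real (Suc K' choose Suc r) * (1 - t) ^ (K' - r) * t ^ Suc r * real (Suc r) =
        real (Suc K') * t * (real (K' choose r) * (1 - t) ^ (K' - r) * t ^ r)" .
  qed
  also have "\<dots> = real (Suc K') * t" by (simp add: sum_distrib_left[symmetric] binom_sum1)
  finally show ?thesis using Suc by simp
qed

lemma TP:
  fixes a b :: "nat \<Rightarrow> real"
  assumes a0: "\<forall>i\<le>n. a i \<ge> 0" and b0: "\<forall>i\<le>n. b i \<ge> 0" and ab: "(\<Sum>i\<le>n. a i) = (\<Sum>i\<le>n. b i)"
    and K1: "K \<ge> 1"
    and nsd: "K \<ge> 2 \<longrightarrow> (\<forall>\<gamma>\<in>mindex n (K-2). \<forall>d. (\<Sum>i\<le>n. d i) = 0 \<longrightarrow> Qf n \<gamma> h d \<le> 0)"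
  shows "Dp n (\<lambda>i. (1 - 1/real K) * a i + (1/real K) * b i) K h (\<lambda>_. 0) \<le> Dp n a (K-1) (dc n b h) (\<lambda>_. 0)"
proof -
  define z :: "nat \<Rightarrow> nat" where "z = (\<lambda>_. 0)"
  define t where "t = 1 / real K"
  have t01: "0 \<le> t" "t \<le> 1" using K1 unfolding t_def by auto
  define \<eta> where "\<eta> r = Dp n a (K - r) (Dp n b r h) z" for r
  define w where "w r = real (K choose r) * (1 - t) ^ (K - r) * t ^ r" for r
  have w0: "w r \<ge> 0" for r unfolding w_def using t01 by simp
  have exp: "Dp n (\<lambda>i. (1 - t) * a i + t * b i) K h z = (\<Sum>r\<le>K. w r * \<eta> r)"
  proof -
    have "Dp n (\<lambda>i. (1 - t) * a i + t * b i) K h z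
        = (\<Sum>r\<le>K. real (K choose r) * Dp n (\<lambda>i. (1 - t) * a i) (K - r) (Dp n (\<lambda>i. t * b i) r h) z)"
      by (simp add: binom_Dp)
    also have "\<dots> = (\<Sum>r\<le>K. w r * \<eta> r)"
    proof (intro sum.cong refl)
      fix r
      have s1: "Dp n (\<lambda>i. (1 - t) * a i) (K - r) g = (\<lambda>\<gamma>. (1 - t) ^ (K - r) * Dp n a (K - r) g \<gamma>)" for g
        by (rule Dp_scale_T)
      have s2: "Dp n (\<lambda>i. t * b i) r h = (\<lambda>\<gamma>. t ^ r * Dp n b r h \<gamma>)"
        by (rule Dp_scale_T)
      show "real (K choose r) * Dp n (\<lambda>i. (1 - t) * a i) (K - r) (Dp n (\<lambda>i. t * b i) r h) z = w r * \<eta> r"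
        unfolding s1 s2 w_def \<eta>_def Dp_scale_h by (simp add: mult_ac)
    qed
    finally show ?thesis .
  qed
  have rhs: "Dp n a (K-1) (dc n b h) z = \<eta> 1"
    unfolding \<eta>_def by (simp add: Dp_Suc)
  have conc: "\<eta> (Suc (Suc p)) - 2 * \<eta> (Suc p) + \<eta> p \<le> 0" if pK: "Suc (Suc p) \<le> K" for p
  proof -
    define q where "q = K - Suc (Suc p)"
    have Kq: "K = Suc (Suc (p + q))" using pK unfolding q_def by simp
    define W where "W \<beta> = dc n b (dc n b h) \<beta> + (-2) * dc n a (dc n b h) \<beta> + dc n a (dc n a h) \<beta>" for \<beta>
    have e1: "\<eta> (Suc (Suc p)) = Dp n a q (Dp n b p (dc n b (dc n b h))) z"
      unfolding \<eta>_def q_def by (simp add: Dp_Suc')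
    have e2: "\<eta> (Suc p) = Dp n a q (Dp n b p (dc n a (dc n b h))) z"
      unfolding \<eta>_def using Kq by (simp add: Dp_Suc' Dp_comm)
    have e3: "\<eta> p = Dp n a q (Dp n b p (dc n a (dc n a h))) z"
      unfolding \<eta>_def using Kq by (simp add: Dp_Suc' Dp_comm)
    have eW: "\<eta> (Suc (Suc p)) - 2 * \<eta> (Suc p) + \<eta> p = Dp n a q (Dp n b p W) z"
      unfolding e1 e2 e3 W_def by (simp add: Dp_add_h Dp_diff_h Dp_scale_h)
    define \<delta> where "\<delta> i = b i - a i" for i
    have d0: "(\<Sum>i\<le>n. \<delta> i) = 0" unfolding \<delta>_def using ab by (simp add: sum_subtractf)
    have Wq: "W \<beta> = Qf n \<beta> h \<delta>" for \<beta>
    proof -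
      have "dc n \<delta> g = (\<lambda>\<gamma>. dc n b g \<gamma> + (-1) * dc n a g \<gamma>)" for g
        using dc_add_T[of n b "\<lambda>i. (-1) * a i" g] dc_scale_T[of n "-1" a g] unfolding \<delta>_def by simp
      hence "dc n \<delta> (dc n \<delta> h) \<beta> = W \<beta>"
        unfolding W_def by (simp add: dc_add_h dc_diff_h dc_scale_h dc_comm[of n b a] algebra_simps)
      thus ?thesis using dcdc_Qf by metis
    qed
    have "\<forall>\<beta>\<in>mindex n (q + p). W \<beta> \<le> 0"
      using nsd Kq d0 Wq by (simp add: add.commute)
    hence "\<forall>\<gamma>\<in>mindex n q. Dp n b p W \<gamma> \<le> 0" by (rule Dp_nonpos[OF b0])
    hence "\<forall>\<gamma>\<in>mindex n 0. Dp n a q (Dp n b p W) \<gamma> \<le> 0"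
      using Dp_nonpos[OF a0, where s=0 and r=q and f="Dp n b p W"] by simp
    moreover have "z \<in> mindex n 0" unfolding z_def mindex_0 by simp
    ultimately show ?thesis unfolding eW by simp
  qed
  define D where "D = \<eta> 1 - \<eta> 0"
  have dif: "r < K \<longrightarrow> \<eta> (Suc r) - \<eta> r \<le> D" for r
  proof (induction r)
    case 0 thus ?case unfolding D_def by simp
  next
    case (Suc r)
    show ?case
    proof
      assume "Suc r < K"
      hence "\<eta> (Suc (Suc r)) - 2 * \<eta> (Suc r) + \<eta> r \<le> 0" using conc by simp
      moreover have "\<eta> (Suc r) - \<eta> r \<le> D" using Suc \<open>Suc r < K\<close> by simp
      ultimately show "\<eta> (Suc (Suc r)) - \<eta> (Suc r) \<le> D" by simp
    qed
  qed
  have bnd: "r \<le> K \<longrightarrow> \<eta> r \<le> \<eta> 0 + real r * D" for r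
  proof (induction r)
    case 0 thus ?case by simp
  next
    case (Suc r)
    show ?case
    proof
      assume "Suc r \<le> K"
      hence "\<eta> (Suc r) - \<eta> r \<le> D" "\<eta> r \<le> \<eta> 0 + real r * D" using dif Suc by auto
      thus "\<eta> (Suc r) \<le> \<eta> 0 + real (Suc r) * D" by (simp add: algebra_simps)
    qed
  qed
  have "(\<Sum>r\<le>K. w r * \<eta> r) \<le> (\<Sum>r\<le>K. w r * (\<eta> 0 + real r * D))"
    using bnd w0 by (intro sum_mono mult_left_mono) auto
  also have "\<dots> = \<eta> 0 * (\<Sum>r\<le>K. w r) + D * (\<Sum>r\<le>K. w r * real r)"
    by (simp add: algebra_simps sum.distrib sum_distrib_left)
  also have "\<dots> = \<eta> 0 + D * (real K * t)"
    unfolding w_def using binom_sum1[of K t] binom_sum2[of K t] by simp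
  also have "\<dots> = \<eta> 1" unfolding t_def D_def using K1 by simp
  finally show ?thesis using exp rhs unfolding t_def z_def by simp
qed

definition pt :: "(nat \<Rightarrow> nat) \<Rightarrow> nat \<Rightarrow> nat \<Rightarrow> real" where
  "pt \<alpha> k = (\<lambda>j. real (\<alpha> j) / real k)"
definition uv :: "nat \<Rightarrow> nat \<Rightarrow> real" where
  "uv i = (\<lambda>j. if j = i then 1 else 0)"

lemma dc_uv: "i \<le> n \<Longrightarrow> dc n (uv i) h \<gamma> = h (ad \<gamma> i)"
  unfolding dc_def uv_def by (simp add: if_distrib[where f="\<lambda>t. t * _"] sum.delta cong: if_cong)

lemma jensen:
  "\<forall>\<alpha>\<in>mindex n k. \<forall>h. (k \<ge> 2 \<longrightarrow> (\<forall>\<gamma>\<in>mindex n (k-2). \<forall>d. (\<Sum>i\<le>n. d i) = 0 \<longrightarrow> Qf n \<gamma> h d \<le> 0))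
     \<longrightarrow> Dp n (pt \<alpha> k) k h (\<lambda>_. 0) \<le> h \<alpha>"
proof (induction k)
  case 0 thus ?case by (simp add: mindex_0)
next
  case (Suc k')
  show ?case
  proof (intro ballI allI impI)
    fix \<alpha> h assume a: "\<alpha> \<in> mindex n (Suc k')"
      and nsd: "Suc k' \<ge> 2 \<longrightarrow> (\<forall>\<gamma>\<in>mindex n (Suc k'-2). \<forall>d. (\<Sum>i\<le>n. d i) = 0 \<longrightarrow> Qf n \<gamma> h d \<le> 0)"
    have "(\<Sum>j\<le>n. \<alpha> j) = Suc k'" using a by (simp add: mindex_def)
    then obtain i where i: "i \<le> n" "\<alpha> i \<ge> 1"
      by (metis (no_types, lifting) atMost_iff finite_atMost leI less_one nat.simps(3) sum_eq_0_iff)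
    define \<alpha>' where "\<alpha>' = sb \<alpha> i"
    have a': "\<alpha>' \<in> mindex n k'" unfolding \<alpha>'_def using sb_in[OF a i(1) i(2)] .
    have aa: "\<alpha> = ad \<alpha>' i" unfolding \<alpha>'_def using ad_sb[of \<alpha> i] i(2) by simp
    show "Dp n (pt \<alpha> (Suc k')) (Suc k') h (\<lambda>_. 0) \<le> h \<alpha>"
    proof (cases "k' = 0")
      case True
      hence a0: "\<alpha>' = (\<lambda>_. 0)" using a' by (simp add: mindex_0)
      have "Dp n (pt \<alpha> (Suc k')) (Suc k') h (\<lambda>_. 0) = (\<Sum>j\<le>n. real (\<alpha> j) * h (ad (\<lambda>_. 0) j))"
        using True by (simp add: Dp_Suc dc_def pt_def)
      also have "\<dots> = h \<alpha>"
        unfolding aa a0 using i(1) by (simp add: ad_def uvec_def if_distrib[where f="\<lambda>t. real t * _"] sum.delta cong: if_cong)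
      finally show ?thesis by simp
    next
      case False
      define h' where "h' = dc n (uv i) h"
      have uv0: "\<forall>j\<le>n. uv i j \<ge> 0" unfolding uv_def by simp
      have nsd': "k' \<ge> 2 \<longrightarrow> (\<forall>\<gamma>\<in>mindex n (k'-2). \<forall>d. (\<Sum>i\<le>n. d i) = 0 \<longrightarrow> Qf n \<gamma> h' d \<le> 0)"
      proof
        assume "k' \<ge> 2"
        hence "\<forall>\<gamma>\<in>mindex n (Suc (k'-2)). \<forall>d. (\<Sum>i\<le>n. d i) = 0 \<longrightarrow> Qf n \<gamma> h d \<le> 0"
        proof -
          have "Suc (k'-2) = Suc k' - 2" using \<open>k' \<ge> 2\<close> by simp
          thus ?thesis using nsd \<open>k' \<ge> 2\<close> by simp
        qed
        thus "\<forall>\<gamma>\<in>mindex n (k'-2). \<forall>d. (\<Sum>i\<le>n. d i) = 0 \<longrightarrow> Qf n \<gamma> h' d \<le> 0"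
          unfolding h'_def by (rule nsd_dc[OF uv0])
      qed
      have IH: "Dp n (pt \<alpha>' k') k' h' (\<lambda>_. 0) \<le> h' \<alpha>'" using Suc.IH a' nsd' by blast
      have h'a: "h' \<alpha>' = h \<alpha>" unfolding h'_def aa using dc_uv[OF i(1)] by simp
      have pa0: "\<forall>j\<le>n. pt \<alpha>' k' j \<ge> 0" unfolding pt_def by simp
      have sa: "(\<Sum>j\<le>n. pt \<alpha>' k' j) = (\<Sum>j\<le>n. uv i j)"
        unfolding pt_def uv_def using sum_mindex_size[OF a'] False i(1)
        by (simp add: sum_divide_distrib[symmetric])
      have TPi: "Dp n (\<lambda>j. (1 - 1/real (Suc k')) * pt \<alpha>' k' j + (1/real (Suc k')) * uv i j) (Suc k') h (\<lambda>_. 0)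
           \<le> Dp n (pt \<alpha>' k') (Suc k' - 1) (dc n (uv i) h) (\<lambda>_. 0)"
        by (rule TP[OF pa0 uv0 sa]) (use nsd in auto)
      have pe: "(\<lambda>j. (1 - 1/real (Suc k')) * pt \<alpha>' k' j + (1/real (Suc k')) * uv i j) = pt \<alpha> (Suc k')"
      proof
        fix j
        have "(1 - 1/real (Suc k')) * (real (\<alpha>' j) / real k') = real (\<alpha>' j) / real (Suc k')"
          using False by (simp add: field_simps)
        thus "(1 - 1/real (Suc k')) * pt \<alpha>' k' j + (1/real (Suc k')) * uv i j = pt \<alpha> (Suc k') j"
          unfolding pt_def uv_def aa ad_def uvec_def by (auto simp: add_divide_distrib)
      qed
      show ?thesis using TPi IH h'a unfolding pe h'_def by simp
    qed
  qed
qed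

lemma jensen_ev:
  assumes "\<alpha> \<in> mindex n k" "k \<ge> 2 \<longrightarrow> (\<forall>\<gamma>\<in>mindex n (k-2). \<forall>d. (\<Sum>i\<le>n. d i) = 0 \<longrightarrow> Qf n \<gamma> h d \<le> 0)"
  shows "ev n k h (pt \<alpha> k) \<le> h \<alpha>"
  using jensen[of n k] assms unfolding ev_Dp by blast



lemma ev_add: "ev n k (\<lambda>\<beta>. f \<beta> + g \<beta>) T = ev n k f T + ev n k g T"
  unfolding ev_def by (simp add: distrib_left sum.distrib)
lemma ev_diff: "ev n k (\<lambda>\<beta>. f \<beta> - g \<beta>) T = ev n k f T - ev n k g T"
  unfolding ev_def by (simp add: right_diff_distrib sum_subtractf)
lemma ev_scale: "ev n k (\<lambda>\<beta>. a * f \<beta>) T = a * ev n k f T"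
  unfolding ev_def by (simp add: sum_distrib_left mult_ac)
lemma ev_sum: "finite A \<Longrightarrow> ev n k (\<lambda>\<beta>. \<Sum>x\<in>A. f x \<beta>) T = (\<Sum>x\<in>A. ev n k (f x) T)"
  unfolding ev_def by (simp add: sum_distrib_left sum.swap[of _ A])

lemma ev_lin1:
  assumes T1: "(\<Sum>i\<le>n. T i) = 1" and m: "m \<le> n"
  shows "ev n k (\<lambda>\<beta>. real (\<beta> m)) T = real k * T m"
proof (induction k)
  case 0 thus ?case by (simp add: ev_0)
next
  case (Suc k)
  have "dc n T (\<lambda>\<beta>. real (\<beta> m)) = (\<lambda>\<gamma>. real (\<gamma> m) + T m)"
  proof
    fix \<gamma>
    have "dc n T (\<lambda>\<beta>. real (\<beta> m)) \<gamma> = (\<Sum>i\<le>n. T i * real (\<gamma> m)) + (\<Sum>i\<le>n. T i * (if m = i then 1 else 0))"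
      unfolding dc_def ad_def uvec_def by (simp add: distrib_left sum.distrib if_distrib[where f=real] cong: if_cong)
    also have "\<dots> = real (\<gamma> m) + T m"
      using T1 m by (simp add: sum_distrib_right[symmetric] if_distrib[where f="\<lambda>t. T _ * t"] sum.delta' cong: if_cong)
    finally show "dc n T (\<lambda>\<beta>. real (\<beta> m)) \<gamma> = real (\<gamma> m) + T m" .
  qed
  thus ?case using Suc T1 by (simp add: ev_dc ev_add ev_const algebra_simps)
qed

lemma ev_Y:
  assumes T1: "(\<Sum>i\<le>n. T i) = 1" and I: "I \<subseteq> {..n}"
  shows "ev n k (\<lambda>\<beta>. \<Sum>m\<in>I. real (\<beta> m)) T = real k * (\<Sum>m\<in>I. T m)"
proof -
  have fI: "finite I" using I finite_subset by blast
  show ?thesis using ev_lin1[OF T1] I fI by (simp add: ev_sum sum_distrib_left subset_eq)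
qed

lemma ev_Y2:
  assumes T1: "(\<Sum>i\<le>n. T i) = 1" and I: "I \<subseteq> {..n}"
  shows "ev n k (\<lambda>\<beta>. (\<Sum>m\<in>I. real (\<beta> m))^2) T
         = real k * (real k - 1) * (\<Sum>m\<in>I. T m)^2 + real k * (\<Sum>m\<in>I. T m)"
proof (induction k)
  case 0 thus ?case by (simp add: ev_0)
next
  case (Suc k)
  have fI: "finite I" using I finite_subset by blast
  define t where "t = (\<Sum>m\<in>I. T m)"
  define Y where "Y \<beta> = (\<Sum>m\<in>I. real (\<beta> m))" for \<beta> :: "nat \<Rightarrow> nat"
  have Ya: "Y (ad \<gamma> i) = Y \<gamma> + (if i \<in> I then 1 else 0)" for \<gamma> i
    unfolding Y_def ad_def uvec_def using fI
    by (simp add: sum.distrib if_distrib[where f=real] sum.delta cong: if_cong)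
  have "dc n T (\<lambda>\<beta>. (Y \<beta>)^2) = (\<lambda>\<gamma>. (Y \<gamma>)^2 + 2 * t * Y \<gamma> + t)"
  proof
    fix \<gamma>
    have "dc n T (\<lambda>\<beta>. (Y \<beta>)^2) \<gamma> = (\<Sum>i\<le>n. T i * ((Y \<gamma>)^2 + 2 * Y \<gamma> * (if i \<in> I then 1 else 0) + (if i \<in> I then 1 else 0)))"
      unfolding dc_def Ya by (intro sum.cong refl) (auto simp: power2_eq_square algebra_simps)
    also have "\<dots> = (\<Sum>i\<le>n. T i) * (Y \<gamma>)^2 + 2 * Y \<gamma> * (\<Sum>i\<le>n. T i * (if i \<in> I then 1 else 0)) + (\<Sum>i\<le>n. T i * (if i \<in> I then 1 else 0))"
      by (simp add: distrib_left sum.distrib sum_distrib_left sum_distrib_right mult_ac)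
    also have "(\<Sum>i\<le>n. T i * (if i \<in> I then 1 else 0)) = t"
      unfolding t_def using I
      by (simp add: if_distrib[where f="\<lambda>x. T _ * x"] sum.inter_restrict[symmetric] Int_absorb1 cong: if_cong)
    finally show "dc n T (\<lambda>\<beta>. (Y \<beta>)^2) \<gamma> = (Y \<gamma>)^2 + 2 * t * Y \<gamma> + t" using T1 by simp
  qed
  hence "ev n (Suc k) (\<lambda>\<beta>. (Y \<beta>)^2) T = ev n k (\<lambda>\<beta>. (Y \<beta>)^2) T + 2 * t * ev n k Y T + t"
    by (simp add: ev_dc ev_add ev_scale ev_const T1)
  also have "ev n k Y T = real k * t" unfolding Y_def t_def by (rule ev_Y[OF T1 I])
  finally show ?case using Suc unfolding Y_def t_def by (simp add: algebra_simps power2_eq_square)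
qed

definition Vf :: "nat \<Rightarrow> (nat \<Rightarrow> real) \<Rightarrow> real" where
  "Vf n T = (\<Sum>a\<le>n. \<Sum>b\<le>n. if a < b then (\<Sum>m\<in>{a..<b}. T m) - (\<Sum>m\<in>{a..<b}. T m)^2 else 0)"

lemma ev_psi:
  assumes a: "\<alpha> \<in> mindex n k" and k: "k \<ge> 1"
  shows "ev n k (psi n) (pt \<alpha> k) - psi n \<alpha> = real k / 2 * Vf n (pt \<alpha> k)"
proof -
  define T where "T = pt \<alpha> k"
  have T1: "(\<Sum>i\<le>n. T i) = 1" unfolding T_def pt_def using sum_mindex_size[OF a] k
    by (simp add: sum_divide_distrib[symmetric])
  have aT: "real (\<alpha> m) = real k * T m" for m unfolding T_def pt_def using k by simp
  have trm: "ev n k (\<lambda>\<beta>. if a < b then (1/2) * (\<Sum>m\<in>{a..<b}. real (\<beta> m))^2 else 0) T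
      = (if a < b then (1/2) * (real k * (real k - 1) * (\<Sum>m\<in>{a..<b}. T m)^2 + real k * (\<Sum>m\<in>{a..<b}. T m)) else 0)"
    if b: "b \<le> n" for a b
  proof (cases "a < b")
    case True
    have "{a..<b} \<subseteq> {..n}" using b by auto
    thus ?thesis using True ev_Y2[OF T1, of "{a..<b}" k] ev_scale[of n k "1/2" "\<lambda>\<beta>. (\<Sum>m = a..<b. real (\<beta> m))\<^sup>2" T]
      by simp
  next
    case False thus ?thesis using ev_const[of n k 0 T] by simp
  qed
  have "ev n k (psi n) T = (\<Sum>a\<le>n. \<Sum>b\<le>n. ev n k (\<lambda>\<beta>. if a < b then (1/2) * (\<Sum>m\<in>{a..<b}. real (\<beta> m))^2 else 0) T)"
    unfolding psi_def by (simp only: ev_sum finite_atMost)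
  also have "\<dots> = (\<Sum>a\<le>n. \<Sum>b\<le>n. if a < b then (1/2) * (real k * (real k - 1) * (\<Sum>m\<in>{a..<b}. T m)^2 + real k * (\<Sum>m\<in>{a..<b}. T m)) else 0)"
    by (intro sum.cong refl trm) simp
  finally have evp: "ev n k (psi n) T = (\<Sum>a\<le>n. \<Sum>b\<le>n. if a < b then (1/2) * (real k * (real k - 1) * (\<Sum>m\<in>{a..<b}. T m)^2 + real k * (\<Sum>m\<in>{a..<b}. T m)) else 0)" .
  have psa: "psi n \<alpha> = (\<Sum>a\<le>n. \<Sum>b\<le>n. if a < b then (1/2) * (real k * (\<Sum>m\<in>{a..<b}. T m))^2 else 0)"
    unfolding psi_def aT by (simp only: sum_distrib_left[symmetric])
  have "ev n k (psi n) T - psi n \<alpha> =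
      (\<Sum>a\<le>n. \<Sum>b\<le>n. (if a < b then (1/2) * (real k * (real k - 1) * (\<Sum>m\<in>{a..<b}. T m)^2 + real k * (\<Sum>m\<in>{a..<b}. T m)) else 0)
                       - (if a < b then (1/2) * (real k * (\<Sum>m\<in>{a..<b}. T m))^2 else 0))"
    unfolding evp psa by (simp add: sum_subtractf)
  also have "\<dots> = real k / 2 * Vf n T"
  proof -
    have alg: "(if c then (1/2) * (real k * (real k - 1) * s^2 + real k * s) else 0) - (if c then (1/2) * (real k * s)^2 else 0)
        = real k / 2 * (if c then s - s^2 else 0)" for c and s :: real
      by (cases c) (simp_all add: power2_eq_square algebra_simps)
    have "(\<Sum>a\<le>n. \<Sum>b\<le>n. (if a < b then (1/2) * (real k * (real k - 1) * (\<Sum>m\<in>{a..<b}. T m)^2 + real k * (\<Sum>m\<in>{a..<b}. T m)) else 0)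
                       - (if a < b then (1/2) * (real k * (\<Sum>m\<in>{a..<b}. T m))^2 else 0))
        = (\<Sum>a\<le>n. \<Sum>b\<le>n. real k / 2 * (if a < b then (\<Sum>m\<in>{a..<b}. T m) - (\<Sum>m\<in>{a..<b}. T m)^2 else 0))"
      by (intro sum.cong refl alg)
    also have "\<dots> = real k / 2 * Vf n T" unfolding Vf_def by (simp only: sum_distrib_left)
    finally show ?thesis .
  qed
  finally show ?thesis unfolding T_def .
qed

lemma gauss1: "(\<Sum>i\<le>m. real i) = real m * (real m + 1) / 2"
  by (induction m) (simp_all add: field_simps)
lemma gauss2: "(\<Sum>i\<le>m. (real i)^2) = real m * (real m + 1) * (2 * real m + 1) / 6"
  by (induction m) (simp_all add: field_simps power2_eq_square)

lemma tri_Suc: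
  "(\<Sum>a\<le>Suc n. \<Sum>b\<le>Suc n. if a < b then g a b else (0::real))
   = (\<Sum>a\<le>n. \<Sum>b\<le>n. if a < b then g a b else 0) + (\<Sum>a\<le>n. g a (Suc n))"
  by (simp add: sum.distrib)

lemma triA: "(\<Sum>a\<le>n. \<Sum>b\<le>n. if a < b then real b - real a else 0) = real n * (real n + 1) * (real n + 2) / 6"
proof (induction n)
  case 0 thus ?case by simp
next
  case (Suc n)
  have "(\<Sum>a\<le>n. real (Suc n) - real a) = (real n + 1) * (real n + 1) - real n * (real n + 1) / 2"
    by (simp add: sum_subtractf gauss1 algebra_simps)
  thus ?case unfolding tri_Suc Suc by (simp add: field_simps)
qed

lemma triB: "(\<Sum>a\<le>n. \<Sum>b\<le>n. if a < b then (real b - real a)^2 else 0) = real n * (real n + 1)^2 * (real n + 2) / 12"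
proof (induction n)
  case 0 thus ?case by simp
next
  case (Suc n)
  have "(\<Sum>a\<le>n. (real (Suc n) - real a)^2) = (\<Sum>a\<le>n. (real n + 1)^2 - 2 * (real n + 1) * real a + (real a)^2)"
    by (intro sum.cong refl) (simp add: power2_diff algebra_simps)
  also have "\<dots> = (real n + 1) * (real n + 1)^2 - 2 * (real n + 1) * (real n * (real n + 1) / 2) + real n * (real n + 1) * (2 * real n + 1) / 6"
    by (simp add: sum.distrib sum_subtractf sum_distrib_left[symmetric] gauss1 gauss2)
  finally have e: "(\<Sum>a\<le>n. (real (Suc n) - real a)^2) = \<dots>" .
  show ?case unfolding tri_Suc Suc e by (simp add: field_simps power2_eq_square)
qed

lemma sum_gt: fixes m n :: nat assumes "m \<le> n" shows "(\<Sum>b\<le>n. if m < b then f b else (0::real)) = (\<Sum>b\<le>n. f b) - (\<Sum>b\<le>m. f b)"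
proof -
  have u: "{..n} = {..m} \<union> {m<..n}"
  proof (rule set_eqI)
    fix x show "x \<in> {..n} \<longleftrightarrow> x \<in> {..m} \<union> {m<..n}" using assms by auto
  qed
  have "(\<Sum>b\<le>n. if m < b then f b else (0::real)) = sum f ({..n} \<inter> {b. m < b})"
    by (simp add: sum.If_cases)
  also have "{..n} \<inter> {b. m < b} = {m<..n}" by auto
  also have "sum f {m<..n} = sum f {..n} - sum f {..m}"
    unfolding u by (subst sum.union_disjoint) auto
  finally show ?thesis .
qed

lemma Cm_zero:
  assumes m: "m \<le> n"
  shows "(\<Sum>a\<le>n. \<Sum>b\<le>n. if a \<le> m \<and> m < b then 1 - 2 * (real b - real a) / (real n + 1) else 0) = 0"
proof -
  define N where "N = real n + 1"
  have N0: "N > 0" unfolding N_def by simp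
  have inner: "(\<Sum>b\<le>n. if m < b then 1 - 2 * (real b - real a) / N else 0)
      = (real n - real m) * (1 + 2 * real a / N) - 2 / N * (real n * (real n + 1) / 2 - real m * (real m + 1) / 2)" for a
  proof -
    have rw: "1 - 2 * (real b - real a) / N = (1 + 2 * real a / N) - 2 / N * real b" for b
      using N0 by (simp add: field_simps)
    have e0: "(\<Sum>b\<le>n. if m < b then 1 - 2 * (real b - real a) / N else 0)
        = (\<Sum>b\<le>n. 1 - 2 * (real b - real a) / N) - (\<Sum>b\<le>m. 1 - 2 * (real b - real a) / N)"
      by (rule sum_gt[OF m])
    have e1: "(\<Sum>b\<le>n. 1 - 2 * (real b - real a) / N) = (real n + 1) * (1 + 2 * real a / N) - 2 / N * (real n * (real n + 1) / 2)"
      unfolding rw by (simp only: sum_subtractf sum_distrib_left[symmetric] gauss1) simp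
    have e2: "(\<Sum>b\<le>m. 1 - 2 * (real b - real a) / N) = (real m + 1) * (1 + 2 * real a / N) - 2 / N * (real m * (real m + 1) / 2)"
      unfolding rw by (simp only: sum_subtractf sum_distrib_left[symmetric] gauss1) simp
    show ?thesis unfolding e0 e1 e2 by (simp add: algebra_simps add_divide_distrib diff_divide_distrib)
  qed
  have "(\<Sum>a\<le>n. \<Sum>b\<le>n. if a \<le> m \<and> m < b then 1 - 2 * (real b - real a) / N else 0)
      = (\<Sum>a\<le>n. if a \<le> m then (\<Sum>b\<le>n. if m < b then 1 - 2 * (real b - real a) / N else 0) else 0)"
    by (intro sum.cong refl) auto
  also have "\<dots> = (\<Sum>a\<le>m. (\<Sum>b\<le>n. if m < b then 1 - 2 * (real b - real a) / N else 0))"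
  proof -
    have "{a \<in> {..n}. a \<le> m} = {..m}" using m by auto
    thus ?thesis by (simp add: sum.inter_filter[symmetric])
  qed
  also have "\<dots> = (\<Sum>a\<le>m. (real n - real m) * (1 + 2 * real a / N) - 2 / N * (real n * (real n + 1) / 2 - real m * (real m + 1) / 2))"
    by (simp add: inner)
  also have "\<dots> = (real m + 1) * (real n - real m) + (real n - real m) * 2 / N * (real m * (real m + 1) / 2)
                    - (real m + 1) * (2 / N * (real n * (real n + 1) / 2 - real m * (real m + 1) / 2))"
  proof -
    define K0 where "K0 = 2 / N * (real n * (real n + 1) / 2 - real m * (real m + 1) / 2)"
    have rw2: "(real n - real m) * (1 + 2 * real a / N) - 2 / N * (real n * (real n + 1) / 2 - real m * (real m + 1) / 2)
        = ((real n - real m) - K0) + (real n - real m) * 2 / N * real a" for a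
      unfolding K0_def by (simp add: algebra_simps)
    have "(\<Sum>a\<le>m. ((real n - real m) - K0) + (real n - real m) * 2 / N * real a)
        = (real m + 1) * ((real n - real m) - K0) + (real n - real m) * 2 / N * (real m * (real m + 1) / 2)"
      by (simp only: sum.distrib sum_distrib_left[symmetric] gauss1 sum_constant card_atMost of_nat_Suc add.commute)
    thus ?thesis unfolding rw2 by (simp add: K0_def algebra_simps)
  qed
  also have "\<dots> = 0" unfolding N_def using N0 by (simp add: field_simps)
  finally show ?thesis unfolding N_def .
qed

lemma Vf_bound:
  assumes T1: "(\<Sum>i\<le>n. T i) = 1"
  shows "Vf n T \<le> real n * (real n + 2) / 12"
proof -
  define N where "N = real n + 1"
  have N0: "N > 0" unfolding N_def by simp
  define e where "e m = T m - 1 / N" for m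
  have e0: "(\<Sum>m\<le>n. e m) = 0" unfolding e_def N_def using T1 by (simp add: sum_subtractf)
  define u where "u a b = (real b - real a) / N" for a b :: nat
  define s where "s a b = (\<Sum>m\<in>{a..<b}. e m)" for a b
  have ts: "(\<Sum>m\<in>{a..<b}. T m) = u a b + s a b" if "a < b" for a b
  proof -
    have "(\<Sum>m\<in>{a..<b}. T m) = (\<Sum>m\<in>{a..<b}. e m) + (\<Sum>m\<in>{a..<b}. 1 / N)"
      unfolding e_def by (simp add: sum_subtractf)
    also have "(\<Sum>m\<in>{a..<b}. 1 / N) = u a b" unfolding u_def using that by (simp add: of_nat_diff)
    finally show ?thesis unfolding s_def by simp
  qed
  have "Vf n T = (\<Sum>a\<le>n. \<Sum>b\<le>n. (if a < b then u a b - (u a b)^2 else 0) + (if a < b then s a b * (1 - 2 * u a b) else 0) - (if a < b then (s a b)^2 else 0))"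
    unfolding Vf_def by (intro sum.cong refl) (auto simp: ts power2_eq_square algebra_simps)
  also have "\<dots> = (\<Sum>a\<le>n. \<Sum>b\<le>n. if a < b then u a b - (u a b)^2 else 0) + (\<Sum>a\<le>n. \<Sum>b\<le>n. if a < b then s a b * (1 - 2 * u a b) else 0)
                 - (\<Sum>a\<le>n. \<Sum>b\<le>n. if a < b then (s a b)^2 else 0)"
    by (simp add: sum.distrib sum_subtractf)
  also have "(\<Sum>a\<le>n. \<Sum>b\<le>n. if a < b then s a b * (1 - 2 * u a b) else 0) = 0"
  proof -
    have "(\<Sum>a\<le>n. \<Sum>b\<le>n. if a < b then s a b * (1 - 2 * u a b) else 0)
        = (\<Sum>a\<le>n. \<Sum>b\<le>n. \<Sum>m\<le>n. if a \<le> m \<and> m < b then e m * (1 - 2 * u a b) else 0)"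
    proof (intro sum.cong refl)
      fix a b assume b: "b \<in> {..n}"
      have eq: "{a..<b} = {m \<in> {..n}. a \<le> m \<and> m < b}" using b by auto
      have "s a b * (1 - 2 * u a b) = (\<Sum>m\<in>{m \<in> {..n}. a \<le> m \<and> m < b}. e m * (1 - 2 * u a b))"
        unfolding s_def sum_distrib_right eq ..
      also have "\<dots> = (\<Sum>m\<le>n. if a \<le> m \<and> m < b then e m * (1 - 2 * u a b) else 0)"
        by (rule sum.inter_filter) simp
      finally have "s a b * (1 - 2 * u a b) = (\<Sum>m\<le>n. if a \<le> m \<and> m < b then e m * (1 - 2 * u a b) else 0)" .
      moreover have "\<not> a < b \<Longrightarrow> (\<Sum>m\<le>n. if a \<le> m \<and> m < b then e m * (1 - 2 * u a b) else 0) = 0"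
        by (intro sum.neutral) auto
      ultimately show "(if a < b then s a b * (1 - 2 * u a b) else 0)
          = (\<Sum>m\<le>n. if a \<le> m \<and> m < b then e m * (1 - 2 * u a b) else 0)" by auto
    qed
    also have "\<dots> = (\<Sum>m\<le>n. \<Sum>a\<le>n. \<Sum>b\<le>n. if a \<le> m \<and> m < b then e m * (1 - 2 * u a b) else 0)"
      by (rule swap3)
    also have "\<dots> = (\<Sum>m\<le>n. e m * (\<Sum>a\<le>n. \<Sum>b\<le>n. if a \<le> m \<and> m < b then 1 - 2 * (real b - real a) / (real n + 1) else 0))"
      unfolding sum_distrib_left u_def N_def by (intro sum.cong refl) auto
    also have "\<dots> = 0" using Cm_zero by simp
    finally show ?thesis .
  qed
  also have "(\<Sum>a\<le>n. \<Sum>b\<le>n. if a < b then u a b - (u a b)^2 else 0)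
      = (\<Sum>a\<le>n. \<Sum>b\<le>n. if a < b then real b - real a else 0) / N - (\<Sum>a\<le>n. \<Sum>b\<le>n. if a < b then (real b - real a)^2 else 0) / N^2"
    unfolding u_def by (simp add: sum_divide_distrib sum_subtractf[symmetric] if_distrib[where f="\<lambda>x. x / _"] power_divide
        del: sum_subtractf cong: if_cong) (intro sum.cong refl, auto)
  also have "\<dots> = real n * (real n + 2) / 12"
  proof -
    have z: "real n + 1 \<noteq> 0" by simp
    have e1: "real n * (real n + 1) * (real n + 2) / 6 / (real n + 1) = real n * (real n + 2) / 6"
      using z by (simp add: field_simps)
    have e2: "real n * (real n + 1)^2 * (real n + 2) / 12 / (real n + 1)^2 = real n * (real n + 2) / 12"
      using z by (simp add: field_simps)
    show ?thesis unfolding triA triB N_def e1 e2 by (simp add: field_simps)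
  qed
  finally show ?thesis
    by (simp add: sum_nonneg)
qed



lemma bary_nonneg: assumes "x \<in> simplex n" "i \<le> n" shows "bary n x i \<ge> 0"
proof (cases "i = 0")
  case True thus ?thesis using assms(1) by (simp add: simplex_def bary_def)
next
  case False thus ?thesis using assms by (simp add: simplex_def bary_def)
qed

lemma bern_nonneg: assumes "x \<in> simplex n" shows "bern n k \<beta> x \<ge> 0"
  unfolding bern_def using bary_nonneg[OF assms]
  by (intro mult_nonneg_nonneg divide_nonneg_nonneg prod_nonneg zero_le_power) auto

lemma sum_bern: "(\<Sum>\<beta>\<in>mindex n k. bern n k \<beta> x) = 1"
  using ev_const[of n k 1 "bary n x"] unfolding ev_def bern_Bk by (simp add: sum_bary)

lemma rep_lower:
  assumes "rep n k f c" "\<forall>\<beta>\<in>mindex n k. c \<beta> \<ge> m" "x \<in> simplex n"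
  shows "f x \<ge> m"
proof -
  have "m = (\<Sum>\<beta>\<in>mindex n k. m * bern n k \<beta> x)" by (simp add: sum_distrib_left[symmetric] sum_bern)
  also have "\<dots> \<le> (\<Sum>\<beta>\<in>mindex n k. c \<beta> * bern n k \<beta> x)"
    using assms(2) bern_nonneg[OF assms(3)] by (intro sum_mono mult_right_mono) auto
  also have "\<dots> = f x" using assms(1) unfolding rep_def by simp
  finally show ?thesis .
qed

lemma rep_upper_ratio:
  assumes "rep n k f c" "rep n k g d" "\<forall>\<beta>\<in>mindex n k. d \<beta> > 0" "\<forall>\<beta>\<in>mindex n k. c \<beta> / d \<beta> \<le> R"
    "x \<in> simplex n"
  shows "f x \<le> R * g x"
proof -
  have "f x = (\<Sum>\<beta>\<in>mindex n k. c \<beta> * bern n k \<beta> x)" using assms(1) unfolding rep_def by simp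
  also have "\<dots> \<le> (\<Sum>\<beta>\<in>mindex n k. (R * d \<beta>) * bern n k \<beta> x)"
  proof (intro sum_mono mult_right_mono)
    fix \<beta> assume b: "\<beta> \<in> mindex n k"
    show "c \<beta> \<le> R * d \<beta>" using assms(3,4) b by (simp add: divide_le_eq)
  qed (use bern_nonneg[OF assms(5)] in auto)
  also have "\<dots> = R * g x" using assms(2) unfolding rep_def by (simp add: sum_distrib_left mult.assoc)
  finally show ?thesis .
qed

lemma elev_lower:
  assumes "\<forall>\<beta>\<in>mindex n k. c \<beta> \<ge> m"
  shows "\<forall>\<beta>\<in>mindex n (Suc k). elevc n k c \<beta> \<ge> m"
proof
  fix \<beta> assume b: "\<beta> \<in> mindex n (Suc k)"
  have "m = (\<Sum>i\<le>n. real (\<beta> i) / real (Suc k) * m)"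
    using sum_mindex_size[OF b] by (simp add: sum_distrib_right[symmetric] sum_divide_distrib[symmetric])
  also have "\<dots> \<le> (\<Sum>i\<le>n. real (\<beta> i) / real (Suc k) * c (sb \<beta> i))"
  proof (intro sum_mono)
    fix i assume i: "i \<in> {..n}"
    show "real (\<beta> i) / real (Suc k) * m \<le> real (\<beta> i) / real (Suc k) * c (sb \<beta> i)"
    proof (cases "\<beta> i = 0")
      case False
      hence "sb \<beta> i \<in> mindex n k" using sb_in[OF b] i by simp
      thus ?thesis using assms by (intro mult_left_mono) auto
    qed simp
  qed
  also have "\<dots> = elevc n k c \<beta>" unfolding elevc_def mulc_def using b by simp
  finally show "elevc n k c \<beta> \<ge> m" .
qed

lemma pt_point:
  assumes a: "\<alpha> \<in> mindex n k" and k: "k \<ge> 1"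
  defines "x \<equiv> (\<lambda>i. if i \<in> {1..n} then real (\<alpha> i) / real k else 0)"
  shows "x \<in> simplex n" "bary n x = pt \<alpha> k"
proof -
  have s: "(\<Sum>i\<in>{1..n}. x i) = (real k - real (\<alpha> 0)) / real k"
  proof -
    have "(\<Sum>i\<in>{1..n}. x i) = (\<Sum>i\<in>{1..n}. real (\<alpha> i)) / real k"
      unfolding x_def by (simp add: sum_divide_distrib)
    also have "(\<Sum>i\<in>{1..n}. real (\<alpha> i)) = real k - real (\<alpha> 0)"
      using mindex_0_eq[OF a] by (simp flip: of_nat_sum)
    finally show ?thesis .
  qed
  have a0: "real (\<alpha> 0) \<le> real k" using mindex_0_eq[OF a] by simp
  show "x \<in> simplex n"
    unfolding simplex_def using s a0 k by (auto simp: x_def divide_le_eq)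
  show "bary n x = pt \<alpha> k"
  proof
    fix i show "bary n x i = pt \<alpha> k i"
    proof (cases "i = 0")
      case True thus ?thesis unfolding bary_def pt_def using s k by (simp add: field_simps)
    next
      case False
      show ?thesis
      proof (cases "i \<le> n")
        case True thus ?thesis using False unfolding bary_def pt_def x_def by simp
      next
        case f2: False
        hence "\<alpha> i = 0" using a by (simp add: mindex_def)
        thus ?thesis using False f2 unfolding bary_def pt_def x_def by simp
      qed
    qed
  qed
qed

lemma reps_bcoef: assumes "rep n l f c" "l \<le> k" shows "rep n k f (bcoef n k f)"
proof -
  obtain c' where "rep n k f c'" using reps_mono[OF assms] by blast
  thus ?thesis by (rule rep_bcoef)
qed

lemma bcoef_Suc: assumes "rep n l f c" "l \<le> k" shows "bcoef n (Suc k) f = elevc n k (bcoef n k f)"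
  using bcoef_eq[OF rep_elev[OF reps_bcoef[OF assms]]] .

lemma key_bound:
  assumes rg: "rep n l g c0" and gnn: "\<forall>x\<in>simplex n. g x \<ge> 0" and M0: "M \<ge> 0"
    and EM: "\<forall>\<nu>\<in>mindex n (l-2). \<forall>i j. i < j \<longrightarrow> j \<le> n \<longrightarrow> \<bar>Ep n \<nu> (bcoef n l g) i j\<bar> \<le> M"
    and kl: "l \<le> k" and k2: "2 \<le> k" and a: "\<alpha> \<in> mindex n k"
  shows "bcoef n k g \<alpha> \<ge> - (real (n*(n+2)*l*(l-1)) / 24 * M / (real k - 1))"
proof -
  define cc where "cc j = bcoef n j g" for j
  have rl: "rep n l g (cc l)" unfolding cc_def using reps_bcoef[OF rg] by simp
  have supp: "\<forall>\<beta>. \<beta> \<notin> mindex n l \<longrightarrow> cc l \<beta> = 0" using rl unfolding rep_def by simp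
  have el: "\<forall>j\<ge>l. cc (Suc j) = elevc n j (cc j)" unfolding cc_def using bcoef_Suc[OF rg] by simp
  have EM': "\<forall>\<nu>\<in>mindex n (l-2). \<forall>i j. i < j \<longrightarrow> j \<le> n \<longrightarrow> \<bar>Ep n \<nu> (cc l) i j\<bar> \<le> M"
    using EM unfolding cc_def .
  define F where "F = real (l*(l-1)) / real (k*(k-1))"
  have QC: "\<forall>\<gamma>\<in>mindex n (k-2). \<forall>d. (\<Sum>i\<le>n. d i) = 0 \<longrightarrow> Qf n \<gamma> (cc k) d \<le> F * M * Psi n d"
    using Q_chain[OF supp el M0 EM' kl] unfolding F_def .
  define \<mu> where "\<mu> = F * M"
  have mu0: "\<mu> \<ge> 0" unfolding \<mu>_def F_def using M0 by simp
  define h where "h \<beta> = cc k \<beta> - \<mu> * psi n \<beta>" for \<beta>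
  have nsd: "k \<ge> 2 \<longrightarrow> (\<forall>\<gamma>\<in>mindex n (k-2). \<forall>d. (\<Sum>i\<le>n. d i) = 0 \<longrightarrow> Qf n \<gamma> h d \<le> 0)"
  proof (intro impI ballI allI)
    fix \<gamma> d assume g: "\<gamma> \<in> mindex n (k-2)" and d: "(\<Sum>i\<le>n. d i) = (0::real)"
    have "Qf n \<gamma> h d = Qf n \<gamma> (cc k) d - \<mu> * Psi n d"
      unfolding h_def Qf_diff Qf_scale Qf_psi[OF d] ..
    thus "Qf n \<gamma> h d \<le> 0" using QC g d unfolding \<mu>_def by simp
  qed
  define T where "T = pt \<alpha> k"
  have J: "ev n k h T \<le> h \<alpha>" unfolding T_def by (rule jensen_ev[OF a nsd])
  have evh: "ev n k h T = ev n k (cc k) T - \<mu> * ev n k (psi n) T"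
    unfolding h_def ev_diff ev_scale ..
  obtain x where x: "x \<in> simplex n" "bary n x = T"
    using pt_point[OF a] k2 unfolding T_def by auto
  have gx: "g x = ev n k (cc k) T"
    using reps_bcoef[OF rg kl] x(2) unfolding rep_def ev_def bern_Bk cc_def by (simp add: mult.commute)
  have gx0: "ev n k (cc k) T \<ge> 0" by (metis gnn x(1) gx)
  have evpsi: "ev n k (psi n) T - psi n \<alpha> = real k / 2 * Vf n T"
    unfolding T_def using ev_psi[OF a] k2 by simp
  have T1: "(\<Sum>i\<le>n. T i) = 1"
    unfolding T_def pt_def using sum_mindex_size[OF a] k2 by (simp add: sum_divide_distrib[symmetric])
  have Vb: "Vf n T \<le> real n * (real n + 2) / 12" by (rule Vf_bound[OF T1])
  have "cc k \<alpha> \<ge> ev n k (cc k) T - \<mu> * (real k / 2 * Vf n T)"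
  proof -
    have e0: "ev n k (psi n) T = psi n \<alpha> + real k / 2 * Vf n T" using evpsi by simp
    have e: "\<mu> * ev n k (psi n) T = \<mu> * psi n \<alpha> + \<mu> * (real k / 2 * Vf n T)"
      unfolding e0 by (simp add: distrib_left)
    have "h \<alpha> = cc k \<alpha> - \<mu> * psi n \<alpha>" unfolding h_def ..
    thus ?thesis using J evh e by linarith
  qed
  moreover have "\<mu> * (real k / 2 * Vf n T) \<le> \<mu> * (real k / 2 * (real n * (real n + 2) / 12))"
    using mu0 Vb by (intro mult_left_mono) auto
  moreover have "\<mu> * (real k / 2 * (real n * (real n + 2) / 12)) = real (n*(n+2)*l*(l-1)) / 24 * M / (real k - 1)"
  proof -
    have k1: "real (k - 1) = real k - 1" using k2 by simp
    have kk: "real k \<noteq> 0" "real k - 1 \<noteq> 0" using k2 by auto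
    show ?thesis unfolding \<mu>_def F_def using kk by (simp add: k1 field_simps)
  qed
  ultimately show ?thesis using gx0 unfolding cc_def by linarith
qed

lemma hess_set_finite: "finite {\<bar>Ep n \<gamma> b i j\<bar> | \<gamma> i j. \<gamma> \<in> mindex n K \<and> i < j \<and> j \<le> n}"
proof -
  have "{\<bar>Ep n \<gamma> b i j\<bar> | \<gamma> i j. \<gamma> \<in> mindex n K \<and> i < j \<and> j \<le> n}
      \<subseteq> (\<lambda>(\<gamma>, i, j). \<bar>Ep n \<gamma> b i j\<bar>) ` (mindex n K \<times> {..n} \<times> {..n})"
    by (auto simp: image_iff) (metis atMost_iff less_imp_le_nat order.trans)
  thus ?thesis by (rule finite_subset) auto
qed

lemma hess_norm_Ep: "hess_norm n l P = Max {\<bar>Ep n \<gamma> (bcoef n l P) i j\<bar> | \<gamma> i j. \<gamma> \<in> mindex n (l - 2) \<and> i < j \<and> j \<le> n}"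
  unfolding hess_norm_def Ep_def ..

lemma hess_norm_ge:
  assumes "\<gamma> \<in> mindex n (l - 2)" "i < j" "j \<le> n"
  shows "\<bar>Ep n \<gamma> (bcoef n l P) i j\<bar> \<le> hess_norm n l P"
  unfolding hess_norm_Ep using assms by (intro Max_ge[OF hess_set_finite]) blast

lemma mindex_corner: "i \<le> n \<Longrightarrow> (\<lambda>j. k * uvec i j) \<in> mindex n k"
  unfolding mindex_def by (auto simp: uvec_def sum_distrib_left[symmetric])

theorem proposition5p3:
  fixes n l k :: nat and p q :: "(nat \<Rightarrow> real) \<Rightarrow> real"
  assumes "is_poly n l p" and "is_poly n l q"
    and "\<forall>x\<in>simplex n. p x / q x > 0"
    and "\<forall>j\<ge>l. \<forall>\<alpha>\<in>mindex n j. bcoef n j q \<alpha> > 0"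
    and "(INF x\<in>simplex n. p x / q x) > 0"
    and "k \<ge> l"
    and "real k > omega n l p q / (INF x\<in>simplex n. p x / q x) + 1"
  shows "(\<forall>\<alpha>\<in>mindex n k. bcoef_rat n k p q \<alpha> \<ge> 0)
       \<and> (\<forall>i\<le>n. bcoef_rat n k p q (\<lambda>j. k * uvec i j) > 0)"
proof -
  define fl where "fl = (INF x\<in>simplex n. p x / q x)"
  have fl0: "fl > 0" using assms(5) unfolding fl_def .
  obtain cp where rp: "rep n l p cp" using is_poly_rep[OF assms(1)] by blast
  obtain cq where rq: "rep n l q cq" using is_poly_rep[OF assms(2)] by blast
  have bq: "bcoef n l q = cq" by (rule bcoef_eq[OF rq])
  have bp: "bcoef n l p = cp" by (rule bcoef_eq[OF rp])
  have cqpos: "\<forall>\<beta>\<in>mindex n l. cq \<beta> > 0" using assms(4) bq by auto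
  define mq where "mq = Min (bcoef n l q ` mindex n l)"
  have ne: "mindex n l \<noteq> {}" using mindex_corner[of 0 n l] by auto
  have mq_in: "mq \<in> bcoef n l q ` mindex n l" unfolding mq_def using ne by (intro Min_in) auto
  have mq0: "mq > 0" using mq_in cqpos bq by auto
  have mq_le: "\<forall>\<beta>\<in>mindex n l. mq \<le> cq \<beta>" unfolding mq_def bq by auto
  have qpos: "\<forall>x\<in>simplex n. q x > 0"
  proof
    fix x assume "x \<in> simplex n"
    hence "q x \<ge> mq" using rep_lower[OF rq mq_le] by blast
    thus "q x > 0" using mq0 by simp
  qed
  have bdd: "bdd_below ((\<lambda>x. p x / q x) ` simplex n)"
    using assms(3) by (intro bdd_belowI2[where m=0]) (auto intro: less_imp_le)
  have fl_le: "\<forall>x\<in>simplex n. fl \<le> p x / q x"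
    unfolding fl_def using bdd by (auto intro: cINF_lower)
  define g where "g x = p x + (- fl) * q x" for x
  have rg: "rep n l g (\<lambda>\<beta>. cp \<beta> + (- fl) * cq \<beta>)"
    unfolding g_def by (intro rep_add rp rep_scale rq)
  have bg: "bcoef n j g = (\<lambda>\<beta>. bcoef n j p \<beta> + (- fl) * bcoef n j q \<beta>)" if "l \<le> j" for j
    unfolding g_def by (intro bcoef_eq rep_add rep_scale reps_bcoef[OF rp that] reps_bcoef[OF rq that])
  have gnn: "\<forall>x\<in>simplex n. g x \<ge> 0"
  proof
    fix x assume x: "x \<in> simplex n"
    have "fl * q x \<le> p x / q x * q x" using fl_le x qpos by (intro mult_right_mono) (auto intro: less_imp_le)
    also have "\<dots> = p x" using qpos x by (metis less_irrefl nonzero_divide_eq_eq)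
    finally show "g x \<ge> 0" unfolding g_def by simp
  qed
  define C where "C = real (n*(n+2)*l*(l-1)) / 24"
  have C0: "C \<ge> 0" unfolding C_def by simp
  define M where "M = (if 1 \<le> n \<and> 2 \<le> l then hess_norm n l p + fl * hess_norm n l q else 0)"
  have hn0: "hess_norm n l P \<ge> 0" if "1 \<le> n" "2 \<le> l" for P
  proof -
    have "mindex n (l-2) \<noteq> {}" using mindex_corner[of 0 n "l-2"] by auto
    then obtain \<gamma> where "\<gamma> \<in> mindex n (l-2)" by blast
    hence "\<bar>Ep n \<gamma> (bcoef n l P) 0 1\<bar> \<le> hess_norm n l P" using that by (intro hess_norm_ge) auto
    thus ?thesis by linarith
  qed
  have M0: "M \<ge> 0" unfolding M_def using hn0 fl0 by auto
  have EM: "\<forall>\<nu>\<in>mindex n (l-2). \<forall>i j. i < j \<longrightarrow> j \<le> n \<longrightarrow> \<bar>Ep n \<nu> (bcoef n l g) i j\<bar> \<le> M"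
  proof (intro ballI allI impI)
    fix \<nu> i j assume nu: "\<nu> \<in> mindex n (l-2)" and ij: "i < j" "j \<le> n"
    show "\<bar>Ep n \<nu> (bcoef n l g) i j\<bar> \<le> M"
    proof (cases "2 \<le> l")
      case True
      have n1: "1 \<le> n" using ij by simp
      have "Ep n \<nu> (bcoef n l g) i j = Ep n \<nu> (bcoef n l p) i j + (- fl) * Ep n \<nu> (bcoef n l q) i j"
        unfolding bg[OF order_refl] Ep_def by (simp add: algebra_simps)
      hence "\<bar>Ep n \<nu> (bcoef n l g) i j\<bar> \<le> \<bar>Ep n \<nu> (bcoef n l p) i j\<bar> + \<bar>(- fl) * Ep n \<nu> (bcoef n l q) i j\<bar>"
        by (simp only: abs_triangle_ineq)
      also have "\<bar>Ep n \<nu> (bcoef n l p) i j\<bar> + \<bar>(- fl) * Ep n \<nu> (bcoef n l q) i j\<bar> = \<bar>Ep n \<nu> (bcoef n l p) i j\<bar> + fl * \<bar>Ep n \<nu> (bcoef n l q) i j\<bar>"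
        using fl0 by (simp add: abs_mult)
      also have "\<dots> \<le> hess_norm n l p + fl * hess_norm n l q"
        using hess_norm_ge[OF nu ij] fl0 by (intro add_mono mult_left_mono) auto
      finally show ?thesis unfolding M_def using True n1 by simp
    next
      case False
      have "bcoef n l g (madd3 \<nu> a b) = 0" if "a \<le> n" "b \<le> n" for a b
      proof -
        have "madd3 \<nu> a b \<in> mindex n (Suc (Suc (l-2)))" by (rule madd3_in[OF nu that])
        hence "madd3 \<nu> a b \<notin> mindex n l" using False mindex_unique by fastforce
        thus ?thesis using reps_bcoef[OF rg order_refl] unfolding rep_def by blast
      qed
      hence "Ep n \<nu> (bcoef n l g) i j = 0" unfolding Ep_def using ij prv_le[of i n] prv_le[of j n] by simp
      thus ?thesis using M0 by simp
    qed
  qed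
  define zt where "zt = zeta n l p q"
  have zt_fl: "fl \<le> zt"
  proof -
    define R where "R = bcoef_rat n l p q ` mindex n l"
    have fR: "finite R" "R \<noteq> {}" unfolding R_def using ne by auto
    have x0: "(\<lambda>_. 0) \<in> simplex n" unfolding simplex_def by simp
    have ratio: "\<forall>\<beta>\<in>mindex n l. cp \<beta> / cq \<beta> \<le> Max R"
      using fR unfolding R_def bcoef_rat_def bp bq by auto
    have "p (\<lambda>_. 0) \<le> Max R * q (\<lambda>_. 0)" by (rule rep_upper_ratio[OF rp rq cqpos ratio x0])
    hence "p (\<lambda>_. 0) / q (\<lambda>_. 0) \<le> Max R" using qpos x0 by (simp add: divide_le_eq)
    hence "fl \<le> Max R" using fl_le x0 by force
    thus ?thesis unfolding zt_def zeta_def R_def by simp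
  qed
  have hnq0: "1 \<le> n \<and> 2 \<le> l \<Longrightarrow> hess_norm n l q \<ge> 0" using hn0 by blast
  have om: "omega n l p q = C / mq * (hess_norm n l p + zt * hess_norm n l q)"
    unfolding omega_def C_def mq_def zt_def by (simp add: field_simps)
  have CM: "C * M \<le> mq * omega n l p q"
  proof (cases "1 \<le> n \<and> 2 \<le> l")
    case True
    have "M \<le> hess_norm n l p + zt * hess_norm n l q"
      unfolding M_def using True zt_fl hnq0[OF True] by (simp add: mult_right_mono)
    hence "C * M \<le> C * (hess_norm n l p + zt * hess_norm n l q)" using C0 by (rule mult_left_mono)
    moreover have "mq * omega n l p q = C * (hess_norm n l p + zt * hess_norm n l q)"
      unfolding om using mq0 by simp
    ultimately show ?thesis by simp
  next
    case False
    hence "n*(n+2)*l*(l-1) = 0" by (cases "n = 0") auto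
    hence "real (n*(n+2)*l*(l-1)) = 0" by (simp only: of_nat_0)
    hence "C = 0" unfolding C_def by simp
    moreover have "omega n l p q = 0" using \<open>C = 0\<close> om by simp
    ultimately show ?thesis by simp
  qed
  have om0: "omega n l p q \<ge> 0"
  proof -
    have "C * M \<ge> 0" using C0 M0 by simp
    hence "0 \<le> mq * omega n l p q" using CM by linarith
    thus ?thesis using mq0 by (simp add: zero_le_mult_iff)
  qed
  have k1: "real k - 1 > omega n l p q / fl" using assms(7) unfolding fl_def by simp
  have k2: "k \<ge> 2"
  proof -
    have "omega n l p q / fl \<ge> 0" using om0 fl0 by simp
    thus ?thesis using k1 by linarith
  qed
  have main: "C * M / (real k - 1) < fl * mq"
  proof -
    have kp: "real k - 1 > 0" using k2 by simp
    have "omega n l p q < fl * (real k - 1)" using k1 fl0 by (simp add: divide_less_eq mult.commute)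
    hence "mq * omega n l p q < mq * (fl * (real k - 1))" using mq0 by simp
    hence "C * M < fl * mq * (real k - 1)" using CM by (simp add: mult_ac)
    thus ?thesis using kp by (simp add: divide_less_eq)
  qed
  have qk: "\<forall>\<beta>\<in>mindex n j. bcoef n j q \<beta> \<ge> mq" if "l \<le> j" for j
    using that
  proof (induction j rule: dec_induct)
    case base thus ?case using mq_le bq by simp
  next
    case (step j)
    thus ?case using elev_lower bcoef_Suc[OF rq step.hyps(1)] by simp
  qed
  have pos: "bcoef n k p \<alpha> > 0" if a: "\<alpha> \<in> mindex n k" for \<alpha>
  proof -
    have kb: "bcoef n k g \<alpha> \<ge> - (C * M / (real k - 1))"
      using key_bound[OF rg gnn M0 EM assms(6) k2 a] unfolding C_def by simp
    have "bcoef n k p \<alpha> = bcoef n k g \<alpha> + fl * bcoef n k q \<alpha>"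
      using bg[OF assms(6)] by simp
    moreover have "fl * bcoef n k q \<alpha> \<ge> fl * mq" using qk[OF assms(6)] a fl0 by simp
    ultimately show ?thesis using kb main by linarith
  qed
  have rat: "bcoef_rat n k p q \<alpha> > 0" if a: "\<alpha> \<in> mindex n k" for \<alpha>
    unfolding bcoef_rat_def using pos[OF a] assms(4) assms(6) a by simp
  show ?thesis using rat mindex_corner by (auto intro: less_imp_le)
qed


end
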